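(* Let $n\ge3$. Then the big height of $I(L_n^2)\subseteq\Bbbk[x_1,\dots,x_n]$ equals $n-\left\lceil\frac n5\right\rceil$.
   Context: $L_n^2$ is the graph on $\{1,\dots,n\}$ with edges $\{i,i+1\}$ ($1\le i\le n-1$) and $\{i,i+2\}$ ($1\le i\le n-2$). $I(G)=\langle x_ix_j:\{i,j\}\in E(G)\rangle$, $\Bbbk$ a field. The big height of an ideal is the maximum height of its minimal prime ideals. *)

theory Defs
  imports "HOL-Library.Poly_Mapping" "HOL-Library.Extended_Nat" "HOL-Algebra.Ideal"
begin

type_synonym 'a mpoly = "(nat \<Rightarrow>\<^sub>0 nat) \<Rightarrow>\<^sub>0 'a"

definition poly_ring :: "nat \<Rightarrow> ('a::field) mpoly ring" where
  "poly_ring n = \<lparr> carrier = {p. \<forall>m \<in> Poly_Mapping.keys p. Poly_Mapping.keys m \<subseteq> {1..n}},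
                   monoid.mult = (*), one = 1, zero = 0, add = (+) \<rparr>"

definition var :: "nat \<Rightarrow> ('a::field) mpoly" where
  "var i = Poly_Mapping.single (Poly_Mapping.single i 1) 1"

definition L2_edges :: "nat \<Rightarrow> nat set set" where
  "L2_edges n = {{i, i+1} | i. 1 \<le> i \<and> i \<le> n - 1} \<union> {{i, i+2} | i. 1 \<le> i \<and> i + 2 \<le> n}"

definition edge_ideal :: "nat \<Rightarrow> nat set set \<Rightarrow> ('a::field) mpoly set" where
  "edge_ideal n E = genideal (poly_ring n) {var i * var j | i j. {i, j} \<in> E}"

definition height :: "('a, 'b) ring_scheme \<Rightarrow> 'a set \<Rightarrow> enat" where
  "height R P = (SUP k \<in> {k. \<exists>Q. (\<forall>i\<le>k. primeideal (Q i) R) \<and> (\<forall>i<k. Q i \<subset> Q (Suc i)) \<and> Q k = P}. enat k)"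

definition minimal_primes :: "('a, 'b) ring_scheme \<Rightarrow> 'a set \<Rightarrow> 'a set set" where
  "minimal_primes R I = {P. primeideal P R \<and> I \<subseteq> P \<and>
      (\<forall>Q. primeideal Q R \<and> I \<subseteq> Q \<and> Q \<subseteq> P \<longrightarrow> Q = P)}"

definition big_height :: "('a, 'b) ring_scheme \<Rightarrow> 'a set \<Rightarrow> enat" where
  "big_height R I = (SUP P \<in> minimal_primes R I. height R P)"

end

theory Submission
  imports Defs
begin


definition vars :: "((nat \<Rightarrow>\<^sub>0 nat) \<Rightarrow>\<^sub>0 'a::zero) \<Rightarrow> nat set" where
  "vars p = \<Union> (Poly_Mapping.keys ` Poly_Mapping.keys p)"

definition PB :: "nat set \<Rightarrow> ((nat \<Rightarrow>\<^sub>0 nat) \<Rightarrow>\<^sub>0 'a::zero) set" where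
  "PB S = {p. vars p \<subseteq> S}"

lemma keys_add_nat: "Poly_Mapping.keys ((a::'b \<Rightarrow>\<^sub>0 nat) + b) = Poly_Mapping.keys a \<union> Poly_Mapping.keys b"
  by (auto simp: in_keys_iff lookup_add)

lemma vars_0[simp]: "vars 0 = {}" by (simp add: vars_def)
lemma vars_1[simp]: "vars (1::('a::{zero_neq_one}) mpoly) = {}"
  by (simp add: vars_def)
lemma vars_single: "vars (Poly_Mapping.single m a) \<subseteq> Poly_Mapping.keys m"
  by (simp add: vars_def)
lemma vars_add: "vars (p + q) \<subseteq> vars p \<union> vars q"
  using keys_add[of p q] by (auto simp: vars_def)
lemma vars_uminus[simp]: "vars (- (p::('a::ab_group_add) mpoly)) = vars p"
  by (simp add: vars_def)
lemma vars_diff: "vars ((p::('a::ab_group_add) mpoly) - q) \<subseteq> vars p \<union> vars q"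
  using keys_diff[of p q] by (auto simp: vars_def)
lemma vars_mult: "vars ((p::('a::comm_semiring_1) mpoly) * q) \<subseteq> vars p \<union> vars q"
proof
  fix x assume "x \<in> vars (p * q)"
  then obtain m where m: "m \<in> Poly_Mapping.keys (p*q)" "x \<in> Poly_Mapping.keys m" by (auto simp: vars_def)
  then obtain a b where "m = a + b" "a \<in> Poly_Mapping.keys p" "b \<in> Poly_Mapping.keys q"
    using keys_mult[of p q] by blast
  then show "x \<in> vars p \<union> vars q" using m by (auto simp: vars_def keys_add_nat)
qed
lemma vars_sum: "vars (sum (f::_\<Rightarrow>('a::comm_monoid_add) mpoly) A) \<subseteq> (\<Union>i\<in>A. vars (f i))"
  using keys_sum[of f A] unfolding vars_def by blast

lemma PB_0[simp]: "0 \<in> PB S" by (simp add: PB_def)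
lemma PB_1[simp]: "(1::('a::{zero_neq_one}) mpoly) \<in> PB S" by (simp add: PB_def)
lemma PB_add[simp,intro]: "p \<in> PB S \<Longrightarrow> q \<in> PB S \<Longrightarrow> p + q \<in> PB S"
  using vars_add[of p q] by (auto simp: PB_def)
lemma PB_diff[simp,intro]: "(p::('a::ab_group_add) mpoly) \<in> PB S \<Longrightarrow> q \<in> PB S \<Longrightarrow> p - q \<in> PB S"
  using vars_diff[of p q] by (auto simp: PB_def)
lemma PB_uminus[simp]: "(- (p::('a::ab_group_add) mpoly)) \<in> PB S \<longleftrightarrow> p \<in> PB S"
  by (simp add: PB_def)
lemma PB_mult[simp,intro]: "(p::('a::comm_semiring_1) mpoly) \<in> PB S \<Longrightarrow> q \<in> PB S \<Longrightarrow> p * q \<in> PB S"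
  using vars_mult[of p q] by (auto simp: PB_def)
lemma PB_sum[intro]: "(\<And>i. i \<in> A \<Longrightarrow> (f i::('a::comm_monoid_add) mpoly) \<in> PB S) \<Longrightarrow> sum f A \<in> PB S"
  using vars_sum[of f A] unfolding PB_def by blast
lemma PB_prod[intro]: "(\<And>i. i \<in> A \<Longrightarrow> (f i::('a::comm_semiring_1) mpoly) \<in> PB S) \<Longrightarrow> prod f A \<in> PB S"
  by (induction A rule: infinite_finite_induct) auto
lemma PB_power[intro]: "(p::('a::comm_semiring_1) mpoly) \<in> PB S \<Longrightarrow> p ^ k \<in> PB S"
  by (induction k) auto
lemma PB_mono: "S \<subseteq> T \<Longrightarrow> p \<in> PB S \<Longrightarrow> p \<in> PB T"
  by (auto simp: PB_def)
lemma PB_single: "Poly_Mapping.keys m \<subseteq> S \<Longrightarrow> Poly_Mapping.single m a \<in> PB S"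
  using vars_single[of m a] by (auto simp: PB_def)

lemma var_power: "(var i :: ('a::field) mpoly) ^ k = Poly_Mapping.single (Poly_Mapping.single i k) 1"
  by (induction k) (simp_all add: var_def mult_single single_add[symmetric] add.commute)

lemma var_PB: "i \<in> S \<Longrightarrow> (var i :: ('a::field) mpoly) \<in> PB S"
  unfolding var_def by (rule PB_single) simp

lemma carrier_pr: "carrier (poly_ring n) = PB {1..n}"
  by (auto simp: poly_ring_def PB_def vars_def)
lemma pr_simps[simp]: "mult (poly_ring n) = (*)" "add (poly_ring n) = (+)"
  "one (poly_ring n) = 1" "zero (poly_ring n) = 0"
  by (simp_all add: poly_ring_def)

lemma cring_pr: "cring (poly_ring n :: ('a::field) mpoly ring)"
  apply (rule cringI)
    apply (rule abelian_groupI)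
          apply (auto simp: carrier_pr algebra_simps)[6]
   apply (metis PB_uminus right_minus)
   apply (rule comm_monoidI)
       apply (auto simp: carrier_pr algebra_simps)
  done

lemma domain_pr: "domain (poly_ring n :: ('a::field) mpoly ring)"
  apply (rule domain.intro[OF cring_pr])
  apply (rule domain_axioms.intro)
  by auto

lemma a_inv_pr: "x \<in> carrier (poly_ring n) \<Longrightarrow> a_inv (poly_ring n :: ('a::field) mpoly ring) x = - x"
proof -
  assume x: "x \<in> carrier (poly_ring n)"
  interpret cring "poly_ring n :: ('a::field) mpoly ring" by (rule cring_pr)
  have "- x \<in> carrier (poly_ring n)" using x by (simp add: carrier_pr)
  moreover have "- x \<oplus>\<^bsub>poly_ring n\<^esub> x = \<zero>\<^bsub>poly_ring n\<^esub>" by simp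
  ultimately show ?thesis using x by (metis minus_equality)
qed


lemma ideal_prI:
  fixes I :: "('a::field) mpoly set"
  assumes "I \<subseteq> PB {1..n}" "0 \<in> I" "\<And>a b. a \<in> I \<Longrightarrow> b \<in> I \<Longrightarrow> a + b \<in> I"
    "\<And>a. a \<in> I \<Longrightarrow> - a \<in> I" "\<And>a x. a \<in> I \<Longrightarrow> x \<in> PB {1..n} \<Longrightarrow> x * a \<in> I"
  shows "ideal I (poly_ring n)"
proof -
  interpret cring "poly_ring n :: 'a mpoly ring" by (rule cring_pr)
  show ?thesis
  proof (rule idealI)
    show "ring (poly_ring n :: 'a mpoly ring)" by (rule ring_axioms)
    show "subgroup I (add_monoid (poly_ring n))"
    proof (rule subgroup.intro)
      show "I \<subseteq> carrier (add_monoid (poly_ring n))" using assms(1) by (simp add: carrier_pr)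
      show "\<And>x y. x \<in> I \<Longrightarrow> y \<in> I \<Longrightarrow> x \<otimes>\<^bsub>add_monoid (poly_ring n)\<^esub> y \<in> I"
        using assms(3) by simp
      show "\<one>\<^bsub>add_monoid (poly_ring n)\<^esub> \<in> I" using assms(2) by simp
      fix x assume x: "x \<in> I"
      have "inv\<^bsub>add_monoid (poly_ring n)\<^esub> x = a_inv (poly_ring n) x" by (simp add: a_inv_def)
      also have "\<dots> = - x" using x assms(1) by (intro a_inv_pr) (auto simp: carrier_pr)
      finally show "inv\<^bsub>add_monoid (poly_ring n)\<^esub> x \<in> I" using assms(4) x by simp
    qed
    show "\<And>a x. a \<in> I \<Longrightarrow> x \<in> carrier (poly_ring n) \<Longrightarrow> x \<otimes>\<^bsub>poly_ring n\<^esub> a \<in> I"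
      using assms(5) by (simp add: carrier_pr)
    show "\<And>a x. a \<in> I \<Longrightarrow> x \<in> carrier (poly_ring n) \<Longrightarrow> a \<otimes>\<^bsub>poly_ring n\<^esub> x \<in> I"
      using assms(5) by (simp add: carrier_pr mult.commute)
  qed
qed

context
  fixes n :: nat and I :: "('a::field) mpoly set"
  assumes I: "ideal I (poly_ring n)"
begin

lemma id_sub: "I \<subseteq> PB {1..n}"
  using ideal.axioms(1)[OF I] additive_subgroup.a_subset carrier_pr by metis
lemma id_0: "0 \<in> I"
  using ideal.axioms(1)[OF I] additive_subgroup.zero_closed by fastforce
lemma id_add: "a \<in> I \<Longrightarrow> b \<in> I \<Longrightarrow> a + b \<in> I"
  using ideal.axioms(1)[OF I] additive_subgroup.a_closed by fastforce
lemma id_mult: "a \<in> I \<Longrightarrow> x \<in> PB {1..n} \<Longrightarrow> x * a \<in> I"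
  using ideal.I_l_closed[OF I] by (fastforce simp: carrier_pr)
lemma id_mult2: "a \<in> I \<Longrightarrow> x \<in> PB {1..n} \<Longrightarrow> a * x \<in> I"
  using id_mult by (simp add: mult.commute)
lemma id_uminus: "a \<in> I \<Longrightarrow> - a \<in> I"
proof -
  assume a: "a \<in> I"
  have "(-1) * a \<in> I" by (rule id_mult[OF a]) (simp add: PB_def)
  then show ?thesis by simp
qed
lemma id_diff: "a \<in> I \<Longrightarrow> b \<in> I \<Longrightarrow> a - b \<in> I"
  using id_add id_uminus by (metis diff_conv_add_uminus)
lemma id_sum: "(\<And>i. i \<in> A \<Longrightarrow> f i \<in> I) \<Longrightarrow> sum f A \<in> I"
  by (induction A rule: infinite_finite_induct) (auto intro: id_0 id_add)

end

context
  fixes n :: nat and P :: "('a::field) mpoly set"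
  assumes P: "primeideal P (poly_ring n)"
begin
lemma pr_ideal: "ideal P (poly_ring n)" using P primeideal.axioms(1) by blast
lemma pr_one: "(1::'a mpoly) \<notin> P"
proof
  assume "1 \<in> P"
  then have "\<forall>x\<in>PB {1..n}. x \<in> P" using id_mult[OF pr_ideal] by fastforce
  then show False using primeideal.I_notcarr[OF P] id_sub[OF pr_ideal] by (auto simp: carrier_pr)
qed
lemma pr_prime: "a \<in> PB {1..n} \<Longrightarrow> b \<in> PB {1..n} \<Longrightarrow> a * b \<in> P \<Longrightarrow> a \<in> P \<or> b \<in> P"
  using primeideal.I_prime[OF P] by (simp add: carrier_pr)
lemma pr_power: "a \<in> PB {1..n} \<Longrightarrow> a \<notin> P \<Longrightarrow> a ^ k \<notin> P"
  by (induction k) (use pr_one pr_prime in auto)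
end

lemma primeideal_prI:
  fixes P :: "('a::field) mpoly set"
  assumes "ideal P (poly_ring n)" "1 \<notin> P"
    "\<And>a b. a \<in> PB {1..n} \<Longrightarrow> b \<in> PB {1..n} \<Longrightarrow> a * b \<in> P \<Longrightarrow> a \<in> P \<or> b \<in> P"
  shows "primeideal P (poly_ring n)"
  apply (rule primeidealI[OF assms(1) cring_pr])
  using assms by (auto simp: carrier_pr)

lemma poly_expand: "(p::('a::comm_monoid_add) mpoly) = (\<Sum>m\<in>Poly_Mapping.keys p. Poly_Mapping.single m (Poly_Mapping.lookup p m))"
proof (rule poly_mapping_eqI)
  fix k
  have "Poly_Mapping.lookup (\<Sum>m\<in>Poly_Mapping.keys p. Poly_Mapping.single m (Poly_Mapping.lookup p m)) k
     = (\<Sum>m\<in>Poly_Mapping.keys p. Poly_Mapping.lookup (Poly_Mapping.single m (Poly_Mapping.lookup p m)) k)"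
    by (simp add: Poly_Mapping.lookup_sum)
  also have "\<dots> = (\<Sum>m\<in>Poly_Mapping.keys p. if m = k then Poly_Mapping.lookup p m else 0)"
    by (intro sum.cong) (auto simp: lookup_single when_def)
  also have "\<dots> = Poly_Mapping.lookup p k" by (simp add: in_keys_iff)
  finally show "Poly_Mapping.lookup p k = Poly_Mapping.lookup (\<Sum>m\<in>Poly_Mapping.keys p. Poly_Mapping.single m (Poly_Mapping.lookup p m)) k" by simp
qed


definition PC :: "nat \<Rightarrow> nat set \<Rightarrow> ('a::field) mpoly set" where
  "PC n C = {p \<in> PB {1..n}. \<forall>m\<in>Poly_Mapping.keys p. Poly_Mapping.keys m \<inter> C \<noteq> {}}"

lemma PC_ideal: "ideal (PC n C :: ('a::field) mpoly set) (poly_ring n)"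
proof (rule ideal_prI)
  show "PC n C \<subseteq> PB {1..n}" by (auto simp: PC_def)
  show "0 \<in> (PC n C :: 'a mpoly set)" by (simp add: PC_def)
  show "a + b \<in> PC n C" if "a \<in> PC n C" "b \<in> PC n C" for a b :: "'a mpoly"
    using that keys_add[of a b] by (auto simp: PC_def)
  show "- a \<in> PC n C" if "a \<in> PC n C" for a :: "'a mpoly"
    using that by (auto simp: PC_def)
  show "x * a \<in> PC n C" if "a \<in> PC n C" "x \<in> PB {1..n}" for a x :: "'a mpoly"
  proof -
    have "Poly_Mapping.keys m \<inter> C \<noteq> {}" if m: "m \<in> Poly_Mapping.keys (x * a)" for m
    proof -
      obtain u v where "m = u + v" "u \<in> Poly_Mapping.keys x" "v \<in> Poly_Mapping.keys a"
        using keys_mult[of x a] m by blast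
      then show ?thesis using \<open>a \<in> PC n C\<close> by (auto simp: PC_def keys_add_nat)
    qed
    then show ?thesis using that by (auto simp: PC_def)
  qed
qed

lemma PC_PB_zero: "p \<in> PC n C \<Longrightarrow> p \<in> PB D \<Longrightarrow> D \<inter> C = {} \<Longrightarrow> p = 0"
proof -
  assume a: "p \<in> PC n C" "p \<in> PB D" "D \<inter> C = {}"
  have "Poly_Mapping.keys p = {}"
  proof (rule ccontr)
    assume "Poly_Mapping.keys p \<noteq> {}"
    then obtain m where m: "m \<in> Poly_Mapping.keys p" by blast
    then have "Poly_Mapping.keys m \<subseteq> D" using a(2) by (auto simp: PB_def vars_def)
    moreover have "Poly_Mapping.keys m \<inter> C \<noteq> {}" using a(1) m by (auto simp: PC_def)
    ultimately show False using a(3) by blast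
  qed
  then show ?thesis by simp
qed

lemma PC_split:
  assumes "(p::('a::field) mpoly) \<in> PB {1..n}"
  shows "\<exists>p1 p2. p = p1 + p2 \<and> p1 \<in> PB ({1..n} - C) \<and> p2 \<in> PC n C"
proof -
  define A1 where "A1 = {m \<in> Poly_Mapping.keys p. Poly_Mapping.keys m \<inter> C = {}}"
  define A2 where "A2 = {m \<in> Poly_Mapping.keys p. Poly_Mapping.keys m \<inter> C \<noteq> {}}"
  define f where "f m = Poly_Mapping.single m (Poly_Mapping.lookup p m)" for m
  have "p = sum f (Poly_Mapping.keys p)" unfolding f_def by (rule poly_expand)
  also have "Poly_Mapping.keys p = A1 \<union> A2" by (auto simp: A1_def A2_def)
  also have "sum f (A1 \<union> A2) = sum f A1 + sum f A2"
    by (rule sum.union_disjoint) (auto simp: A1_def A2_def)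
  finally have eq: "p = sum f A1 + sum f A2" .
  have km: "Poly_Mapping.keys m \<subseteq> {1..n}" if "m \<in> Poly_Mapping.keys p" for m
    using assms that by (auto simp: PB_def vars_def)
  have "sum f A1 \<in> PB ({1..n} - C)"
    by (rule PB_sum) (use km in \<open>auto simp: f_def A1_def intro!: PB_single\<close>)
  moreover have "sum f A2 \<in> PC n C"
  proof -
    have "sum f A2 \<in> PB {1..n}"
      by (rule PB_sum) (use km in \<open>auto simp: f_def A2_def intro!: PB_single\<close>)
    moreover have "Poly_Mapping.keys (sum f A2) \<subseteq> A2"
      using keys_sum[of f A2] by (auto simp: f_def split: if_splits)
    ultimately show ?thesis by (auto simp: PC_def A2_def)
  qed
  ultimately show ?thesis using eq by blast
qed

lemma one_notin_PC: "(1::('a::field) mpoly) \<notin> PC n C"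
  by (simp add: PC_def)

lemma PC_prime: "primeideal (PC n C :: ('a::field) mpoly set) (poly_ring n)"
proof (rule primeideal_prI[OF PC_ideal one_notin_PC])
  fix a b :: "'a mpoly"
  assume ab: "a \<in> PB {1..n}" "b \<in> PB {1..n}" "a * b \<in> PC n C"
  show "a \<in> PC n C \<or> b \<in> PC n C"
  proof (rule ccontr)
    assume nab: "\<not> (a \<in> PC n C \<or> b \<in> PC n C)"
    obtain a1 a2 where a: "a = a1 + a2" "a1 \<in> PB ({1..n} - C)" "a2 \<in> PC n C"
      using PC_split[OF ab(1)] by blast
    obtain b1 b2 where b: "b = b1 + b2" "b1 \<in> PB ({1..n} - C)" "b2 \<in> PC n C"
      using PC_split[OF ab(2)] by blast
    have a1: "a1 \<noteq> 0" using a nab by auto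
    have b1: "b1 \<noteq> 0" using b nab by auto
    have sub: "PB ({1..n} - C) \<subseteq> PB {1..n}" by (auto intro: PB_mono)
    have a2c: "a2 \<in> PB {1..n}" using a(3) by (auto simp: PC_def)
    have "a1 * b2 \<in> PC n C" using a b sub by (intro id_mult[OF PC_ideal]) auto
    moreover have "a2 * b1 \<in> PC n C" using a b sub by (intro id_mult2[OF PC_ideal]) auto
    moreover have "a2 * b2 \<in> PC n C" using a b a2c by (intro id_mult2[OF PC_ideal]) (auto simp: PC_def)
    ultimately have "a1 * b2 + a2 * b1 + a2 * b2 \<in> PC n C"
      by (intro id_add[OF PC_ideal])
    then have "a * b - (a1 * b2 + a2 * b1 + a2 * b2) \<in> PC n C"
      using ab(3) by (intro id_diff[OF PC_ideal]) auto
    moreover have "a * b - (a1 * b2 + a2 * b1 + a2 * b2) = a1 * b1"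
      using a b by (simp add: algebra_simps)
    ultimately have "a1 * b1 \<in> PC n C" by simp
    moreover have "a1 * b1 \<in> PB ({1..n} - C)" using a b by auto
    ultimately have "a1 * b1 = 0" by (rule PC_PB_zero) auto
    then show False using a1 b1 by simp
  qed
qed

lemma keys_var: "Poly_Mapping.keys (var i :: ('a::field) mpoly) = {Poly_Mapping.single i 1}"
  by (simp add: var_def)

lemma var_in_PC_iff: "i \<in> {1..n} \<Longrightarrow> (var i :: ('a::field) mpoly) \<in> PC n C \<longleftrightarrow> i \<in> C"
  by (auto simp: PC_def keys_var var_PB)

lemma mono_split:
  assumes "i \<in> Poly_Mapping.keys (m::nat \<Rightarrow>\<^sub>0 nat)"
  shows "\<exists>m'. m = m' + Poly_Mapping.single i 1 \<and> Poly_Mapping.keys m' \<subseteq> Poly_Mapping.keys m"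
proof -
  define m' where "m' = Poly_Mapping.update i (Poly_Mapping.lookup m i - 1) m"
  have "m = m' + Poly_Mapping.single i 1"
    using assms by (intro poly_mapping_eqI) (auto simp: m'_def lookup_add lookup_update lookup_single in_keys_iff when_def)
  moreover have "Poly_Mapping.keys m' \<subseteq> Poly_Mapping.keys m"
    using assms by (auto simp: m'_def keys_update)
  ultimately show ?thesis by blast
qed

lemma PC_sub:
  fixes J :: "('a::field) mpoly set"
  assumes J: "ideal J (poly_ring n)" and vars: "\<And>i. i \<in> C \<Longrightarrow> i \<in> {1..n} \<Longrightarrow> var i \<in> J"
  shows "PC n C \<subseteq> J"
proof
  fix p :: "'a mpoly" assume p: "p \<in> PC n C"
  have "p = (\<Sum>m\<in>Poly_Mapping.keys p. Poly_Mapping.single m (Poly_Mapping.lookup p m))"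
    by (rule poly_expand)
  also have "\<dots> \<in> J"
  proof (rule id_sum[OF J])
    fix m assume m: "m \<in> Poly_Mapping.keys p"
    then obtain i where i: "i \<in> Poly_Mapping.keys m" "i \<in> C" using p by (auto simp: PC_def)
    have km: "Poly_Mapping.keys m \<subseteq> {1..n}" using p m by (auto simp: PC_def PB_def vars_def)
    obtain m' where m': "m = m' + Poly_Mapping.single i 1" "Poly_Mapping.keys m' \<subseteq> Poly_Mapping.keys m"
      using mono_split[OF i(1)] by blast
    have "Poly_Mapping.single m (Poly_Mapping.lookup p m) = Poly_Mapping.single m' (Poly_Mapping.lookup p m) * var i"
      by (simp add: m'(1) var_def mult_single)
    also have "\<dots> \<in> J"
      using km m' i by (intro id_mult[OF J] vars PB_single) auto
    finally show "Poly_Mapping.single m (Poly_Mapping.lookup p m) \<in> J" .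
  qed
  finally show "p \<in> J" .
qed

lemma PC_mono: "C \<subseteq> D \<Longrightarrow> PC n C \<subseteq> PC n D"
  by (auto simp: PC_def)

lemma PC_strict: "C \<subset> D \<Longrightarrow> D \<subseteq> {1..n} \<Longrightarrow> (PC n C :: ('a::field) mpoly set) \<subset> PC n D"
proof -
  assume a: "C \<subset> D" "D \<subseteq> {1..n}"
  then obtain j where j: "j \<in> D" "j \<notin> C" by blast
  have jn: "j \<in> {1..n}" using a j by auto
  have "(var j :: 'a mpoly) \<in> PC n D" "(var j :: 'a mpoly) \<notin> PC n C"
    using j var_in_PC_iff[OF jn] by auto
  moreover have "PC n C \<subseteq> (PC n D :: 'a mpoly set)" using PC_mono[of C D n] a by blast
  ultimately show ?thesis by blast
qed


lemma lin_dep: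
  fixes v :: "'i \<Rightarrow> 'k \<Rightarrow> 'r::idom" and B :: "'r set"
  assumes B0: "0 \<in> B" and B1: "1 \<in> B" and Badd: "\<And>x y. x \<in> B \<Longrightarrow> y \<in> B \<Longrightarrow> x + y \<in> B"
     and Bmult: "\<And>x y. x \<in> B \<Longrightarrow> y \<in> B \<Longrightarrow> x * y \<in> B" and Bneg: "\<And>x. x \<in> B \<Longrightarrow> - x \<in> B"
  assumes "finite K"
  shows "finite T \<Longrightarrow> card K < card T \<Longrightarrow> (\<And>t k. t \<in> T \<Longrightarrow> k \<in> K \<Longrightarrow> v t k \<in> B) \<Longrightarrow>
    \<exists>lam. (\<forall>t\<in>T. lam t \<in> B) \<and> (\<exists>t\<in>T. lam t \<noteq> 0) \<and> (\<forall>k\<in>K. (\<Sum>t\<in>T. lam t * v t k) = 0)"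
  using assms(6)
proof (induction K arbitrary: T v rule: finite_induct)
  case empty
  then obtain t0 where t0: "t0 \<in> T" by fastforce
  define lam :: "'i \<Rightarrow> 'r" where "lam t = (if t = t0 then 1 else 0)" for t
  have "\<forall>t\<in>T. lam t \<in> B" using B0 B1 by (simp add: lam_def)
  moreover have "\<exists>t\<in>T. lam t \<noteq> 0" using t0 by (intro bexI[of _ t0]) (simp_all add: lam_def)
  ultimately show ?case by blast
next
  case (insert k K)
  show ?case
  proof (cases "\<forall>t\<in>T. v t k = 0")
    case True
    have "card K < card T" using insert.prems(2) insert.hyps by simp
    then obtain lam where l: "\<forall>t\<in>T. lam t \<in> B" "\<exists>t\<in>T. lam t \<noteq> 0" "\<forall>k\<in>K. (\<Sum>t\<in>T. lam t * v t k) = 0"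
      using insert.IH[of T v] insert.prems(1,3) by blast
    have "\<forall>k'\<in>insert k K. (\<Sum>t\<in>T. lam t * v t k') = 0" using l(3) True by simp
    then show ?thesis using l(1,2) by blast
  next
    case False
    then obtain a where a: "a \<in> T" "v a k \<noteq> 0" by blast
    define T' where "T' = T - {a}"
    define w where "w t k' = v a k * v t k' - v t k * v a k'" for t k'
    have cT': "card K < card T'" using insert.prems(1,2) insert.hyps a by (simp add: T'_def)
    have fT': "finite T'" using insert.prems(1) by (simp add: T'_def)
    have wB: "w t k' \<in> B" if "t \<in> T'" "k' \<in> K" for t k'
    proof -
      have "t \<in> T" using that by (simp add: T'_def)
      then have "v a k \<in> B" "v t k' \<in> B" "v t k \<in> B" "v a k' \<in> B"
        using insert.prems(3) a that by auto
      then show ?thesis unfolding w_def diff_conv_add_uminus by (intro Badd Bmult Bneg)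
    qed
    obtain mu where m: "\<forall>t\<in>T'. mu t \<in> B" "\<exists>t\<in>T'. mu t \<noteq> 0" "\<forall>k'\<in>K. (\<Sum>t\<in>T'. mu t * w t k') = 0"
      using insert.IH[of T' w, OF fT' cT' wB] by blast
    define lam where "lam t = (if t = a then - (\<Sum>s\<in>T'. mu s * v s k) else mu t * v a k)" for t
    have sumT: "(\<Sum>t\<in>T. f t) = f a + (\<Sum>t\<in>T'. f t)" for f :: "'i \<Rightarrow> 'r"
      using a insert.prems(1) by (simp add: T'_def sum.remove)
    have vB: "v t k' \<in> B" if "t \<in> T" "k' \<in> insert k K" for t k' using insert.prems(3) that by blast
    have sB: "(\<Sum>s\<in>F. mu s * v s k) \<in> B" if "finite F" "F \<subseteq> T'" for F
      using that
    proof (induction F rule: finite_induct)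
      case empty then show ?case using B0 by simp
    next
      case (insert x F)
      have "x \<in> T" using insert.prems by (auto simp: T'_def)
      then have "mu x * v x k \<in> B" using m(1) insert.prems vB[of x k] Bmult by blast
      then show ?case using insert.IH insert.prems insert.hyps Badd by simp
    qed
    have lB: "\<forall>t\<in>T. lam t \<in> B"
    proof
      fix t assume t: "t \<in> T"
      show "lam t \<in> B"
      proof (cases "t = a")
        case True then show ?thesis using sB[OF fT' order_refl] Bneg by (simp add: lam_def)
      next
        case False
        then have "t \<in> T'" using t by (simp add: T'_def)
        then show ?thesis using False m(1) Bmult insert.prems(3) a by (simp add: lam_def)
      qed
    qed
    have lnz: "\<exists>t\<in>T. lam t \<noteq> 0"
    proof -
      obtain t where t: "t \<in> T'" "mu t \<noteq> 0" using m by blast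
      then have "t \<noteq> a" "t \<in> T" by (auto simp: T'_def)
      then show ?thesis using t a by (intro bexI[of _ t]) (simp_all add: lam_def)
    qed
    have "(\<Sum>t\<in>T. lam t * v t k') = 0" if k': "k' \<in> insert k K" for k'
    proof -
      have "(\<Sum>t\<in>T. lam t * v t k') = lam a * v a k' + (\<Sum>t\<in>T'. lam t * v t k')" by (rule sumT)
      also have "(\<Sum>t\<in>T'. lam t * v t k') = (\<Sum>t\<in>T'. mu t * v a k * v t k')"
        by (intro sum.cong) (auto simp: lam_def T'_def)
      finally have eq: "(\<Sum>t\<in>T. lam t * v t k') = - (\<Sum>s\<in>T'. mu s * v s k) * v a k' + (\<Sum>t\<in>T'. mu t * v a k * v t k')"
        by (simp add: lam_def)
      show ?thesis
      proof (cases "k' = k")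
        case True
        have "(\<Sum>t\<in>T'. mu t * v a k * v t k) = (\<Sum>s\<in>T'. mu s * v s k) * v a k"
          by (simp add: sum_distrib_right) (simp add: mult_ac)
        then show ?thesis using eq True by simp
      next
        case False
        then have "k' \<in> K" using k' by simp
        then have "(\<Sum>t\<in>T'. mu t * w t k') = 0" using m by blast
        moreover have "(\<Sum>t\<in>T'. mu t * w t k') = (\<Sum>t\<in>T'. mu t * v a k * v t k') - (\<Sum>s\<in>T'. mu s * v s k) * v a k'"
        proof -
          have "(\<Sum>s\<in>T'. mu s * v s k) * v a k' = (\<Sum>t\<in>T'. mu t * v t k * v a k')"
            by (simp add: sum_distrib_right)
          moreover have "(\<Sum>t\<in>T'. mu t * w t k') = (\<Sum>t\<in>T'. mu t * v a k * v t k') - (\<Sum>t\<in>T'. mu t * v t k * v a k')"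
            by (simp add: w_def right_diff_distrib sum_subtractf mult.assoc)
          ultimately show ?thesis by simp
        qed
        ultimately show ?thesis unfolding eq by simp
      qed
    qed
    then show ?thesis using lB lnz by blast
  qed
qed
lemma strip_lemma:
  fixes Q Q' :: "('a::field) mpoly set"
  assumes Q: "primeideal Q (poly_ring n)" and Q': "ideal Q' (poly_ring n)" and QQ: "Q \<subseteq> Q'"
    and y: "y \<in> PB {1..n}" "y \<notin> Q" "y \<in> Q'"
  shows "(\<And>i. lam i \<in> PB {1..n}) \<Longrightarrow> (\<And>i. lam i \<in> Q' \<Longrightarrow> lam i \<in> Q) \<Longrightarrow>
     (\<Sum>i\<le>N. lam i * y ^ i) \<in> Q \<Longrightarrow> \<forall>i\<le>N. lam i \<in> Q'"
proof (induction N arbitrary: lam)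
  case 0
  then show ?case using QQ by auto
next
  case (Suc N)
  have QI: "ideal Q (poly_ring n)" by (rule pr_ideal[OF Q])
  have eq: "(\<Sum>i\<le>Suc N. lam i * y ^ i) = lam 0 + y * (\<Sum>i\<le>N. lam (Suc i) * y ^ i)"
    by (subst sum.atMost_Suc_shift) (simp add: sum_distrib_left mult_ac)
  have rc: "(\<Sum>i\<le>N. lam (Suc i) * y ^ i) \<in> PB {1..n}" using Suc.prems y by auto
  have "y * (\<Sum>i\<le>N. lam (Suc i) * y ^ i) \<in> Q'" by (rule id_mult2[OF Q' y(3) rc])
  moreover have "(\<Sum>i\<le>Suc N. lam i * y ^ i) \<in> Q'" using Suc.prems(3) QQ by blast
  ultimately have "(\<Sum>i\<le>Suc N. lam i * y ^ i) - y * (\<Sum>i\<le>N. lam (Suc i) * y ^ i) \<in> Q'"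
    by (intro id_diff[OF Q'])
  then have "lam 0 \<in> Q'" unfolding eq by simp
  then have l0: "lam 0 \<in> Q" using Suc.prems by blast
  then have "(\<Sum>i\<le>Suc N. lam i * y ^ i) - lam 0 \<in> Q"
    using Suc.prems(3) by (intro id_diff[OF QI])
  then have "y * (\<Sum>i\<le>N. lam (Suc i) * y ^ i) \<in> Q" unfolding eq by simp
  then have "(\<Sum>i\<le>N. lam (Suc i) * y ^ i) \<in> Q" using pr_prime[OF Q y(1) rc] y(2) by blast
  then have "\<forall>i\<le>N. lam (Suc i) \<in> Q'" using Suc.IH[of "\<lambda>i. lam (Suc i)"] Suc.prems by blast
  then show ?case using \<open>lam 0 \<in> Q'\<close>
    by (metis Suc_le_mono not0_implies_Suc)
qed


definition indep :: "nat \<Rightarrow> ('a::field) mpoly set \<Rightarrow> nat set \<Rightarrow> bool" where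
  "indep n Q S \<longleftrightarrow> S \<subseteq> {1..n} \<and> (\<forall>p\<in>PB S. p \<in> Q \<longrightarrow> p = 0)"

lemma sum_ext:
  fixes D D1 :: nat
  assumes "\<forall>i>D1. f i = 0" "D1 \<le> D"
  shows "(\<Sum>i\<le>D. f i) = (\<Sum>i\<le>D1. f i)"
proof (rule sum.mono_neutral_right)
  show "{..D1} \<subseteq> {..D}" using assms(2) by auto
  show "\<forall>i\<in>{..D} - {..D1}. f i = 0" using assms(1) by auto
qed simp

definition Rep :: "nat \<Rightarrow> nat set \<Rightarrow> ('a::field) mpoly set" where
  "Rep j S = {p. \<exists>g D. (\<forall>i. g i \<in> PB S) \<and> (\<forall>i>D. g i = 0) \<and> p = (\<Sum>i\<le>D. g i * var j ^ i)}"

lemma Rep_0: "0 \<in> Rep j S"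
  unfolding Rep_def by (rule CollectI, rule exI[of _ "\<lambda>i. 0"], rule exI[of _ 0]) simp

lemma Rep_add:
  assumes "p \<in> Rep j S" "q \<in> Rep j S" shows "p + q \<in> Rep j S"
proof -
  obtain g1 D1 where 1: "\<forall>i. g1 i \<in> PB S" "\<forall>i>D1. g1 i = 0" "p = (\<Sum>i\<le>D1. g1 i * var j ^ i)"
    using assms(1) by (auto simp: Rep_def)
  obtain g2 D2 where 2: "\<forall>i. g2 i \<in> PB S" "\<forall>i>D2. g2 i = 0" "q = (\<Sum>i\<le>D2. g2 i * var j ^ i)"
    using assms(2) by (auto simp: Rep_def)
  define D where "D = max D1 D2"
  have "p = (\<Sum>i\<le>D. g1 i * var j ^ i)" using 1 by (subst sum_ext[of D1]) (simp_all add: D_def)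
  moreover have "q = (\<Sum>i\<le>D. g2 i * var j ^ i)" using 2 by (subst sum_ext[of D2]) (simp_all add: D_def)
  ultimately have "p + q = (\<Sum>i\<le>D. (g1 i + g2 i) * var j ^ i)"
    by (simp add: sum.distrib distrib_right)
  moreover have "\<forall>i. g1 i + g2 i \<in> PB S" using 1 2 by auto
  moreover have "\<forall>i>D. g1 i + g2 i = 0" using 1 2 unfolding D_def by simp
  ultimately show ?thesis unfolding Rep_def
    by (intro CollectI exI[of _ "\<lambda>i. g1 i + g2 i"] exI[of _ D] conjI)
qed

lemma Rep_single:
  assumes "Poly_Mapping.keys m \<subseteq> insert j S"
  shows "(Poly_Mapping.single m a :: ('a::field) mpoly) \<in> Rep j S"
proof -
  define k where "k = Poly_Mapping.lookup m j"
  define m' where "m' = Poly_Mapping.update j 0 m"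
  have m: "m = m' + Poly_Mapping.single j k"
    by (intro poly_mapping_eqI) (auto simp: m'_def k_def lookup_add lookup_update lookup_single when_def)
  have km: "Poly_Mapping.keys m' \<subseteq> S" using assms by (auto simp: m'_def keys_update)
  have eq: "Poly_Mapping.single m a = Poly_Mapping.single m' a * var j ^ k"
    by (simp add: var_power mult_single m)
  define g where "g i = (if i = k then Poly_Mapping.single m' a else 0)" for i
  have "(\<Sum>i\<le>k. g i * var j ^ i) = (\<Sum>i\<le>k. if i = k then Poly_Mapping.single m' a * var j ^ k else 0)"
    by (rule sum.cong) (auto simp: g_def)
  also have "\<dots> = Poly_Mapping.single m' a * var j ^ k" by (subst sum.delta) auto
  finally have "(\<Sum>i\<le>k. g i * var j ^ i) = Poly_Mapping.single m' a * var j ^ k" .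
  moreover have "\<forall>i. g i \<in> PB S" using km by (auto simp: g_def intro: PB_single)
  moreover have "\<forall>i>k. g i = 0" by (simp add: g_def)
  ultimately show ?thesis unfolding Rep_def eq
    by (intro CollectI exI[of _ g] exI[of _ k] conjI) auto
qed

lemma Rep_all:
  assumes "(p :: ('a::field) mpoly) \<in> PB (insert j S)"
  shows "p \<in> Rep j S"
proof -
  have km: "Poly_Mapping.keys m \<subseteq> insert j S" if "m \<in> Poly_Mapping.keys p" for m
    using assms that by (auto simp: PB_def vars_def)
  have "(\<Sum>m\<in>A. Poly_Mapping.single m (Poly_Mapping.lookup p m)) \<in> Rep j S" if "finite A" "A \<subseteq> Poly_Mapping.keys p" for A
    using that
  proof (induction A rule: finite_induct)
    case empty then show ?case by (simp add: Rep_0)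
  next
    case (insert x A)
    have "Poly_Mapping.single x (Poly_Mapping.lookup p x) \<in> Rep j S"
      using km insert.prems by (intro Rep_single) auto
    moreover have "(\<Sum>m\<in>A. Poly_Mapping.single m (Poly_Mapping.lookup p m)) \<in> Rep j S"
      using insert.IH insert.prems by simp
    ultimately show ?case using insert.hyps by (simp add: Rep_add)
  qed
  then show ?thesis by (subst poly_expand) simp
qed

lemma lead:
  fixes g :: "nat \<Rightarrow> ('b::comm_ring_1)"
  assumes "\<forall>i>D. g i = 0" "p = (\<Sum>i\<le>D. g i * x ^ i)" "p \<noteq> 0"
  shows "\<exists>d. g d \<noteq> 0 \<and> p = g d * x ^ d + (\<Sum>i<d. g i * x ^ i)"
proof -
  define A where "A = {i. i \<le> D \<and> g i \<noteq> 0}"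
  have fA: "finite A" by (simp add: A_def)
  have "A \<noteq> {}"
  proof
    assume "A = {}"
    then have "\<forall>i\<le>D. g i = 0" by (auto simp: A_def)
    then have "p = 0" using assms(2) by simp
    then show False using assms(3) by simp
  qed
  define d where "d = Max A"
  have dA: "d \<in> A" using fA \<open>A \<noteq> {}\<close> by (simp add: d_def)
  have beyond: "\<forall>i>d. g i = 0"
  proof (intro allI impI)
    fix i assume "d < i"
    show "g i = 0"
    proof (rule ccontr)
      assume "g i \<noteq> 0"
      then have "i \<in> A" using assms(1) by (auto simp: A_def) (meson not_le)
      then have "i \<le> d" using fA by (simp add: d_def)
      then show False using \<open>d < i\<close> by simp
    qed
  qed
  have "p = (\<Sum>i\<le>d. g i * x ^ i)" using assms(2) dA beyond by (subst (asm) sum_ext[of d]) (auto simp: A_def)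
  also have "\<dots> = g d * x ^ d + (\<Sum>i<d. g i * x ^ i)"
    by (simp add: lessThan_Suc_atMost[symmetric])
  finally show ?thesis using dA by (auto simp: A_def)
qed

lemma alg_rel:
  fixes Q :: "('a::field) mpoly set"
  assumes "indep n Q S" "j \<in> {1..n}" "j \<notin> S" "\<not> indep n Q (insert j S)"
  shows "\<exists>d c h. d \<ge> 1 \<and> c \<in> PB S \<and> c \<noteq> 0 \<and> (\<forall>i. h i \<in> PB S) \<and>
              c * var j ^ d + (\<Sum>i<d. h i * var j ^ i) \<in> Q"
proof -
  have "insert j S \<subseteq> {1..n}" using assms(1,2) by (auto simp: indep_def)
  then obtain p where p: "p \<in> PB (insert j S)" "p \<in> Q" "p \<noteq> 0" using assms(4) by (auto simp: indep_def)
  obtain g D where g: "\<forall>i. g i \<in> PB S" "\<forall>i>D. g i = 0" "p = (\<Sum>i\<le>D. g i * var j ^ i)"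
    using Rep_all[OF p(1)] by (auto simp: Rep_def)
  obtain d where d: "g d \<noteq> 0" "p = g d * var j ^ d + (\<Sum>i<d. g i * var j ^ i)"
    using lead[OF g(2) g(3) p(3)] by blast
  have "d \<ge> 1"
  proof (rule ccontr)
    assume "\<not> 1 \<le> d"
    then have "d = 0" by simp
    then have "p = g 0" using d by simp
    then show False using assms(1) g(1) p by (auto simp: indep_def)
  qed
  then show ?thesis using d g p by blast
qed


definition mn :: "(nat \<Rightarrow>\<^sub>0 nat) \<Rightarrow> ('a::field) mpoly" where
  "mn m = Poly_Mapping.single m 1"

lemma mn_add: "mn (a + b) = (mn a * mn b :: ('a::field) mpoly)"
  by (simp add: mn_def mult_single)

lemma mn_single_var: "mn (Poly_Mapping.single j k) = (var j ^ k :: ('a::field) mpoly)"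
  by (simp add: mn_def var_power)

lemma mn_0: "mn 0 = (1::('a::field) mpoly)"
  by (simp add: mn_def)

lemma mn_PB: "Poly_Mapping.keys m \<subseteq> S \<Longrightarrow> (mn m :: ('a::field) mpoly) \<in> PB S"
  unfolding mn_def by (rule PB_single)

locale keyctx =
  fixes n :: nat and Q :: "('a::field) mpoly set" and S :: "nat set"
    and d :: "nat \<Rightarrow> nat" and c :: "nat \<Rightarrow> 'a mpoly" and h :: "nat \<Rightarrow> nat \<Rightarrow> 'a mpoly"
  assumes Q: "primeideal Q (poly_ring n)" and S: "S \<subseteq> {1..n}"
    and indQ: "\<And>p. p \<in> PB S \<Longrightarrow> p \<in> Q \<Longrightarrow> p = 0"
    and d1: "\<And>j. j \<in> {1..n} - S \<Longrightarrow> d j \<ge> 1"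
    and cS: "\<And>j. j \<in> {1..n} - S \<Longrightarrow> c j \<in> PB S"
    and cnz: "\<And>j. j \<in> {1..n} - S \<Longrightarrow> c j \<noteq> 0"
    and hS: "\<And>j i. j \<in> {1..n} - S \<Longrightarrow> h j i \<in> PB S"
    and rel: "\<And>j. j \<in> {1..n} - S \<Longrightarrow> c j * var j ^ d j + (\<Sum>i<d j. h j i * var j ^ i) \<in> Q"
begin

definition "J = {1..n} - S"
definition "cc = (\<Prod>j\<in>J. c j)"
definition "M = {m. Poly_Mapping.keys m \<subseteq> J \<and> (\<forall>j\<in>J. Poly_Mapping.lookup m j < d j)}"
definition "W = {w. \<exists>b. (\<forall>m\<in>M. b m \<in> PB S) \<and> w = (\<Sum>m\<in>M. b m * mn m)}"
definition "WQ = {x. \<exists>w\<in>W. x - w \<in> Q}"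
definition "V = {x. \<exists>e. cc ^ e * x \<in> WQ}"

lemma QI: "ideal Q (poly_ring n)" by (rule pr_ideal[OF Q])

lemma PBS_sub: "x \<in> PB S \<Longrightarrow> x \<in> PB {1..n}"
  using S by (rule PB_mono)

lemma finite_M: "finite M"
proof -
  have "inj_on (\<lambda>m. restrict (Poly_Mapping.lookup m) J) M"
  proof (rule inj_onI)
    fix x y assume xy: "x \<in> M" "y \<in> M" "restrict (Poly_Mapping.lookup x) J = restrict (Poly_Mapping.lookup y) J"
    show "x = y"
    proof (rule poly_mapping_eqI)
      fix k
      show "Poly_Mapping.lookup x k = Poly_Mapping.lookup y k"
      proof (cases "k \<in> J")
        case True then show ?thesis using xy(3) by (metis restrict_apply')
      next
        case False
        then have "k \<notin> Poly_Mapping.keys x" "k \<notin> Poly_Mapping.keys y" using xy(1,2) by (auto simp: M_def)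
        then show ?thesis by (simp add: in_keys_iff)
      qed
    qed
  qed
  moreover have "(\<lambda>m. restrict (Poly_Mapping.lookup m) J) ` M \<subseteq> PiE J (\<lambda>j. {..<d j})"
    by (auto simp: M_def PiE_def extensional_def)
  moreover have "finite (PiE J (\<lambda>j. {..<d j}))" by (rule finite_PiE) (simp_all add: J_def)
  ultimately show ?thesis by (meson finite_imageD finite_subset)
qed

lemma cc_PB: "cc \<in> PB S" unfolding cc_def using cS by (auto simp: J_def)
lemma cc_nz: "cc \<noteq> 0" unfolding cc_def using cnz by (simp add: J_def)

lemma W_0: "0 \<in> W"
  unfolding W_def by (intro CollectI exI[of _ "\<lambda>m. 0"]) simp

lemma W_add: "x \<in> W \<Longrightarrow> y \<in> W \<Longrightarrow> x + y \<in> W"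
proof -
  assume "x \<in> W" "y \<in> W"
  then obtain b1 b2 where b: "\<forall>m\<in>M. b1 m \<in> PB S" "x = (\<Sum>m\<in>M. b1 m * mn m)"
    "\<forall>m\<in>M. b2 m \<in> PB S" "y = (\<Sum>m\<in>M. b2 m * mn m)" unfolding W_def by blast
  then have "x + y = (\<Sum>m\<in>M. (b1 m + b2 m) * mn m)" by (simp add: sum.distrib distrib_right)
  moreover have "\<forall>m\<in>M. b1 m + b2 m \<in> PB S" using b by auto
  ultimately show ?thesis unfolding W_def by (intro CollectI exI[of _ "\<lambda>m. b1 m + b2 m"] conjI)
qed

lemma W_mult: "x \<in> W \<Longrightarrow> a \<in> PB S \<Longrightarrow> a * x \<in> W"
proof -
  assume "x \<in> W" "a \<in> PB S"
  then obtain b where b: "\<forall>m\<in>M. b m \<in> PB S" "x = (\<Sum>m\<in>M. b m * mn m)" unfolding W_def by blast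
  then have "a * x = (\<Sum>m\<in>M. (a * b m) * mn m)" by (simp add: sum_distrib_left mult.assoc)
  moreover have "\<forall>m\<in>M. a * b m \<in> PB S" using b \<open>a \<in> PB S\<close> by auto
  ultimately show ?thesis unfolding W_def by (intro CollectI exI[of _ "\<lambda>m. a * b m"] conjI)
qed

lemma mn_W: "m \<in> M \<Longrightarrow> mn m \<in> W"
proof -
  assume m: "m \<in> M"
  have "(\<Sum>m'\<in>M. (if m' = m then 1 else 0) * mn m') = (\<Sum>m'\<in>M. if m' = m then mn m else 0)"
    by (rule sum.cong) auto
  also have "\<dots> = mn m" using m finite_M by (subst sum.delta) auto
  finally have "mn m = (\<Sum>m'\<in>M. (if m' = m then 1 else 0) * mn m')" by (rule sym)
  moreover have "\<forall>m'\<in>M. (if m' = m then 1 else 0) \<in> PB S" by auto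
  ultimately show ?thesis unfolding W_def
    by (intro CollectI exI[of _ "\<lambda>m'. if m' = m then 1 else 0"] conjI)
qed

lemma W_sum: "finite A \<Longrightarrow> (\<And>i. i \<in> A \<Longrightarrow> f i \<in> W) \<Longrightarrow> sum f A \<in> W"
  by (induction A rule: finite_induct) (auto intro: W_0 W_add)

lemma WQ_add: "x \<in> WQ \<Longrightarrow> y \<in> WQ \<Longrightarrow> x + y \<in> WQ"
proof -
  assume "x \<in> WQ" "y \<in> WQ"
  then obtain w1 w2 where w: "w1 \<in> W" "x - w1 \<in> Q" "w2 \<in> W" "y - w2 \<in> Q" unfolding WQ_def by blast
  then have "(x - w1) + (y - w2) \<in> Q" by (intro id_add[OF QI])
  moreover have "(x - w1) + (y - w2) = (x + y) - (w1 + w2)" by simp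
  ultimately show ?thesis using W_add w unfolding WQ_def by (metis (mono_tags, lifting) mem_Collect_eq)
qed

lemma WQ_mult: "x \<in> WQ \<Longrightarrow> a \<in> PB S \<Longrightarrow> a * x \<in> WQ"
proof -
  assume "x \<in> WQ" and a: "a \<in> PB S"
  then obtain w where w: "w \<in> W" "x - w \<in> Q" unfolding WQ_def by blast
  then have "a * (x - w) \<in> Q" using a by (intro id_mult[OF QI] PBS_sub)
  moreover have "a * (x - w) = a * x - a * w" by (simp add: algebra_simps)
  ultimately show ?thesis using W_mult[OF w(1) a] unfolding WQ_def by auto
qed

lemma W_WQ: "x \<in> W \<Longrightarrow> x \<in> WQ"
  unfolding WQ_def using id_0[OF QI] by force

lemma Q_WQ: "x \<in> Q \<Longrightarrow> x \<in> WQ"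
  unfolding WQ_def using W_0 by force

lemma WQ_sum: "finite A \<Longrightarrow> (\<And>i. i \<in> A \<Longrightarrow> f i \<in> WQ) \<Longrightarrow> sum f A \<in> WQ"
  by (induction A rule: finite_induct) (auto intro: WQ_add W_WQ W_0)

lemma J_sub: "J \<subseteq> {1..n}" by (auto simp: J_def)
lemma J_iff: "j \<in> J \<longleftrightarrow> j \<in> {1..n} - S" by (simp add: J_def)
lemma finite_J: "finite J" by (simp add: J_def)

lemma step_D:
  assumes m: "m \<in> M" and j: "j \<in> J"
  shows "c j * (var j * mn m) \<in> WQ"
proof -
  have jJ: "j \<in> {1..n} - S" using j by (simp add: J_def)
  define k where "k = Poly_Mapping.lookup m j"
  have kd: "k < d j" using m j by (simp add: M_def k_def)
  have kmJ: "Poly_Mapping.keys m \<subseteq> J" using m by (simp add: M_def)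
  show ?thesis
  proof (cases "k + 1 < d j")
    case True
    define m2 where "m2 = m + Poly_Mapping.single j 1"
    have "m2 \<in> M"
    proof -
      have "Poly_Mapping.keys m2 \<subseteq> J" using kmJ j by (auto simp: m2_def keys_add_nat)
      moreover have "\<forall>j'\<in>J. Poly_Mapping.lookup m2 j' < d j'"
        using m True by (auto simp: M_def m2_def lookup_add lookup_single when_def k_def)
      ultimately show ?thesis by (simp add: M_def)
    qed
    then have "c j * mn m2 \<in> W" by (rule W_mult[OF mn_W cS[OF jJ]])
    then have cW: "c j * mn m2 \<in> WQ" by (rule W_WQ)
    have "(var j :: 'a mpoly) * mn m = mn m2"
      by (simp add: m2_def mn_add mn_single_var mult.commute)
    then show ?thesis using cW by simp
  next
    case False
    then have dk: "d j = Suc k" using kd by simp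
    define m' where "m' = Poly_Mapping.update j 0 m"
    have mm': "m = m' + Poly_Mapping.single j k"
      by (intro poly_mapping_eqI) (auto simp: m'_def k_def lookup_add lookup_update lookup_single when_def)
    have km': "Poly_Mapping.keys m' \<subseteq> J" using kmJ by (auto simp: m'_def keys_update)
    have lm': "Poly_Mapping.lookup m' j = 0" by (simp add: m'_def lookup_update)
    have mi: "m' + Poly_Mapping.single j i \<in> M" if "i < d j" for i
    proof -
      have "Poly_Mapping.keys (m' + Poly_Mapping.single j i) \<subseteq> J" using km' j by (auto simp: keys_add_nat)
      moreover have "\<forall>j'\<in>J. Poly_Mapping.lookup (m' + Poly_Mapping.single j i) j' < d j'"
      proof
        fix j' assume j': "j' \<in> J"
        show "Poly_Mapping.lookup (m' + Poly_Mapping.single j i) j' < d j'"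
        proof (cases "j' = j")
          case True then show ?thesis using that lm' by (simp add: lookup_add)
        next
          case False
          then have "Poly_Mapping.lookup (m' + Poly_Mapping.single j i) j' = Poly_Mapping.lookup m j'"
            by (simp add: lookup_add lookup_single m'_def lookup_update when_def)
          then show ?thesis using m j' by (simp add: M_def)
        qed
      qed
      ultimately show ?thesis by (simp add: M_def)
    qed
    define R where "R = c j * var j ^ d j + (\<Sum>i<d j. h j i * var j ^ i)"
    have RQ: "R \<in> Q" unfolding R_def by (rule rel[OF jJ])
    have m'PB: "mn m' \<in> PB {1..n}" using km' J_sub by (intro mn_PB) auto
    have q: "mn m' * R \<in> Q" by (rule id_mult[OF QI RQ m'PB])
    define w where "w = (\<Sum>i<d j. h j i * mn (m' + Poly_Mapping.single j i))"
    have wW: "w \<in> W" unfolding w_def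
      by (rule W_sum) (auto intro!: W_mult[OF mn_W] mi hS[OF jJ])
    have "(var j :: 'a mpoly) * mn m = mn m' * var j ^ d j"
      by (simp add: mm' dk mn_add mn_single_var algebra_simps)
    then have "c j * (var j * mn m) = mn m' * R - w"
      by (simp add: R_def w_def mn_add mn_single_var algebra_simps sum_distrib_left)
    moreover have "(-1) * w \<in> W" using wW by (rule W_mult) (simp add: PB_def)
    ultimately show ?thesis using q unfolding WQ_def by (intro CollectI bexI[of _ "(-1) * w"]) auto
  qed
qed

lemma WQ_var:
  assumes x: "x \<in> WQ" and j: "j \<in> J"
  shows "cc * (var j * x) \<in> WQ"
proof -
  have jJ: "j \<in> {1..n} - S" using j by (simp add: J_def)
  define cc' where "cc' = (\<Prod>i\<in>J - {j}. c i)"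
  have cc: "cc = c j * cc'" unfolding cc_def cc'_def using finite_J j by (simp add: prod.remove)
  have cc'S: "cc' \<in> PB S" unfolding cc'_def using cS by (auto simp: J_def)
  obtain w where w: "w \<in> W" "x - w \<in> Q" using x unfolding WQ_def by blast
  obtain b where b: "\<forall>m\<in>M. b m \<in> PB S" "w = (\<Sum>m\<in>M. b m * mn m)" using w(1) unfolding W_def by blast
  have "cc * (var j * w) = (\<Sum>m\<in>M. (b m * cc') * (c j * (var j * mn m)))"
    by (simp add: b(2) cc sum_distrib_left mult_ac)
  also have "\<dots> \<in> WQ"
  proof (rule WQ_sum[OF finite_M])
    fix m assume m: "m \<in> M"
    show "(b m * cc') * (c j * (var j * mn m)) \<in> WQ"
      by (rule WQ_mult[OF step_D[OF m j]]) (use b cc'S m in auto)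
  qed
  finally have 1: "cc * (var j * w) \<in> WQ" .
  have "cc * var j \<in> PB {1..n}" using jJ by (intro PB_mult PBS_sub cc_PB var_PB) auto
  then have "(cc * var j) * (x - w) \<in> Q"
    using w(2) by (intro id_mult[OF QI])
  then have 2: "(cc * var j) * (x - w) \<in> WQ" by (rule Q_WQ)
  have "cc * (var j * x) = cc * (var j * w) + (cc * var j) * (x - w)" by (simp add: algebra_simps)
  then show ?thesis using WQ_add[OF 1 2] by simp
qed

lemma V_add: "x \<in> V \<Longrightarrow> y \<in> V \<Longrightarrow> x + y \<in> V"
proof -
  assume "x \<in> V" "y \<in> V"
  then obtain e1 e2 where e: "cc ^ e1 * x \<in> WQ" "cc ^ e2 * y \<in> WQ" unfolding V_def by blast
  have p1: "cc ^ e1 \<in> PB S" "cc ^ e2 \<in> PB S" using cc_PB by auto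
  have "cc ^ e2 * (cc ^ e1 * x) + cc ^ e1 * (cc ^ e2 * y) \<in> WQ"
    by (rule WQ_add[OF WQ_mult[OF e(1) p1(2)] WQ_mult[OF e(2) p1(1)]])
  moreover have "cc ^ e2 * (cc ^ e1 * x) + cc ^ e1 * (cc ^ e2 * y) = cc ^ (e1 + e2) * (x + y)"
    by (simp add: algebra_simps power_add)
  ultimately show ?thesis unfolding V_def by auto
qed

lemma V_mult: "x \<in> V \<Longrightarrow> a \<in> PB S \<Longrightarrow> a * x \<in> V"
proof -
  assume "x \<in> V" "a \<in> PB S"
  then obtain e where e: "cc ^ e * x \<in> WQ" unfolding V_def by blast
  have "a * (cc ^ e * x) \<in> WQ" using e \<open>a \<in> PB S\<close> by (rule WQ_mult)
  then have "cc ^ e * (a * x) \<in> WQ" by (simp add: mult_ac)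
  then show ?thesis unfolding V_def by auto
qed

lemma V_var: "x \<in> V \<Longrightarrow> i \<in> {1..n} \<Longrightarrow> var i * x \<in> V"
proof -
  assume x: "x \<in> V" and i: "i \<in> {1..n}"
  show ?thesis
  proof (cases "i \<in> S")
    case True then show ?thesis using V_mult[OF x var_PB[OF True]] by simp
  next
    case False
    then have iJ: "i \<in> J" using i by (simp add: J_def)
    obtain e where e: "cc ^ e * x \<in> WQ" using x unfolding V_def by blast
    have "cc * (var i * (cc ^ e * x)) \<in> WQ" by (rule WQ_var[OF e iJ])
    then have "cc ^ Suc e * (var i * x) \<in> WQ" by (simp add: mult_ac)
    then show ?thesis unfolding V_def by (intro CollectI exI[of _ "Suc e"])
  qed
qed

lemma zero_M: "0 \<in> M"
proof -
  have "\<forall>j\<in>J. 0 < d j" using d1 unfolding J_def by (metis less_le_trans zero_less_one)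
  then show ?thesis by (simp add: M_def)
qed

lemma V_1: "1 \<in> V"
proof -
  have "(1::'a mpoly) \<in> WQ" using mn_W[OF zero_M] W_WQ by (simp add: mn_0)
  then have "cc ^ 0 * 1 \<in> WQ" by simp
  then show ?thesis unfolding V_def by blast
qed

lemma V_0: "0 \<in> V"
proof -
  have "cc ^ 0 * 0 \<in> WQ" using W_WQ[OF W_0] by simp
  then show ?thesis unfolding V_def by blast
qed

lemma var_pow_V: "x \<in> V \<Longrightarrow> i \<in> {1..n} \<Longrightarrow> var i ^ k * x \<in> V"
  by (induction k) (auto simp: mult.assoc intro: V_var)

lemma mn_V: "Poly_Mapping.keys m \<subseteq> {1..n} \<Longrightarrow> x \<in> V \<Longrightarrow> mn m * x \<in> V"
proof (induction m arbitrary: x rule: update_induct)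
  case const then show ?case by (simp add: mn_0)
next
  case (update f a b)
  have eq: "Poly_Mapping.update a b f = f + Poly_Mapping.single a b"
    using update.hyps(1)
    by (intro poly_mapping_eqI) (auto simp: lookup_update lookup_add lookup_single when_def in_keys_iff)
  have ks: "Poly_Mapping.keys (Poly_Mapping.update a b f) = insert a (Poly_Mapping.keys f)"
    using update.hyps(2) by (simp add: keys_update)
  have a: "a \<in> {1..n}" and kf: "Poly_Mapping.keys f \<subseteq> {1..n}" using update.prems(1) ks by auto
  have "var a ^ b * x \<in> V" by (rule var_pow_V[OF update.prems(2) a])
  then have "mn f * (var a ^ b * x) \<in> V" by (rule update.IH[OF kf])
  then show ?case by (simp add: eq mn_add mn_single_var mult_ac)
qed

lemma V_sum: "finite A \<Longrightarrow> (\<And>i. i \<in> A \<Longrightarrow> f i \<in> V) \<Longrightarrow> sum f A \<in> V"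
  by (induction A rule: finite_induct) (auto intro: V_add V_0)

lemma all_V: "p \<in> PB {1..n} \<Longrightarrow> p \<in> V"
proof -
  assume p: "p \<in> PB {1..n}"
  have "p = (\<Sum>m\<in>Poly_Mapping.keys p. Poly_Mapping.single m (Poly_Mapping.lookup p m))"
    by (rule poly_expand)
  also have "\<dots> \<in> V"
  proof (rule V_sum[OF finite_keys])
    fix m assume m: "m \<in> Poly_Mapping.keys p"
    have km: "Poly_Mapping.keys m \<subseteq> {1..n}" using p m by (auto simp: PB_def vars_def)
    have "mn m * 1 \<in> V" by (rule mn_V[OF km V_1])
    then have "Poly_Mapping.single 0 (Poly_Mapping.lookup p m) * (mn m * 1) \<in> V"
      by (rule V_mult) (rule PB_single, simp)
    then show "Poly_Mapping.single m (Poly_Mapping.lookup p m) \<in> V"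
      by (simp add: mn_def mult_single)
  qed
  finally show ?thesis .
qed


lemma key:
  assumes Q': "primeideal Q' (poly_ring n)" and QQ: "Q \<subseteq> Q'"
    and indQ': "\<And>p. p \<in> PB S \<Longrightarrow> p \<in> Q' \<Longrightarrow> p = 0"
  shows "Q' \<subseteq> Q"
proof
  fix y assume yQ': "y \<in> Q'"
  show "y \<in> Q"
  proof (rule ccontr)
    assume yQ: "y \<notin> Q"
    have y: "y \<in> PB {1..n}" using id_sub[OF pr_ideal[OF Q']] yQ' by blast
    define N where "N = card M"
    have "\<forall>i. \<exists>e. cc ^ e * y ^ i \<in> WQ" using all_V[OF PB_power[OF y]] unfolding V_def by blast
    then obtain e where e: "\<And>i. cc ^ e i * y ^ i \<in> WQ" by metis
    define E where "E = (\<Sum>i\<le>N. e i)"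
    have "\<forall>i. \<exists>b. i \<le> N \<longrightarrow> (\<forall>m\<in>M. b m \<in> PB S) \<and> cc ^ E * y ^ i - (\<Sum>m\<in>M. b m * mn m) \<in> Q"
    proof
      fix i
      show "\<exists>b. i \<le> N \<longrightarrow> (\<forall>m\<in>M. b m \<in> PB S) \<and> cc ^ E * y ^ i - (\<Sum>m\<in>M. b m * mn m) \<in> Q"
      proof (cases "i \<le> N")
        case True
        have le: "e i \<le> E" unfolding E_def by (rule member_le_sum) (use True in auto)
        have "cc ^ (E - e i) * (cc ^ e i * y ^ i) \<in> WQ" by (rule WQ_mult[OF e]) (use cc_PB in auto)
        moreover have "cc ^ (E - e i) * (cc ^ e i * y ^ i) = cc ^ E * y ^ i"
          using le by (simp add: mult.assoc[symmetric] power_add[symmetric])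
        ultimately have "cc ^ E * y ^ i \<in> WQ" by simp
        then obtain w where w: "w \<in> W" "cc ^ E * y ^ i - w \<in> Q" unfolding WQ_def by blast
        then obtain b where "\<forall>m\<in>M. b m \<in> PB S" "w = (\<Sum>m\<in>M. b m * mn m)" unfolding W_def by blast
        then show ?thesis using w by blast
      qed simp
    qed
    then obtain Bf where Bf: "\<And>i. i \<le> N \<Longrightarrow> (\<forall>m\<in>M. Bf i m \<in> PB S) \<and> cc ^ E * y ^ i - (\<Sum>m\<in>M. Bf i m * mn m) \<in> Q"
      by metis
    have "\<exists>lam. (\<forall>t\<in>{..N}. lam t \<in> PB S) \<and> (\<exists>t\<in>{..N}. lam t \<noteq> 0) \<and> (\<forall>m\<in>M. (\<Sum>t\<in>{..N}. lam t * Bf t m) = 0)"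
      by (rule lin_dep[OF PB_0 PB_1 PB_add PB_mult _ finite_M]) (use Bf in \<open>auto simp: N_def\<close>)
    then obtain lam where lam: "\<forall>t\<in>{..N}. lam t \<in> PB S" "\<exists>t\<in>{..N}. lam t \<noteq> 0"
      "\<forall>m\<in>M. (\<Sum>t\<in>{..N}. lam t * Bf t m) = 0" by blast
    define P where "P = (\<Sum>i\<le>N. lam i * y ^ i)"
    define X where "X = (\<Sum>i\<le>N. lam i * (cc ^ E * y ^ i - (\<Sum>m\<in>M. Bf i m * mn m)))"
    have XQ: "X \<in> Q" unfolding X_def
    proof (rule id_sum[OF QI])
      fix i assume i: "i \<in> {..N}"
      show "lam i * (cc ^ E * y ^ i - (\<Sum>m\<in>M. Bf i m * mn m)) \<in> Q"
        using Bf[of i] i lam(1) by (intro id_mult[OF QI] PBS_sub) auto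
    qed
    have s1: "(\<Sum>i\<le>N. lam i * (cc ^ E * y ^ i)) = cc ^ E * P"
      by (simp add: P_def sum_distrib_left mult_ac)
    have "(\<Sum>i\<le>N. lam i * (\<Sum>m\<in>M. Bf i m * mn m)) = (\<Sum>i\<le>N. \<Sum>m\<in>M. lam i * Bf i m * mn m)"
      by (simp add: sum_distrib_left mult_ac)
    also have "\<dots> = (\<Sum>m\<in>M. \<Sum>i\<le>N. lam i * Bf i m * mn m)" by (rule sum.swap)
    also have "\<dots> = (\<Sum>m\<in>M. (\<Sum>i\<le>N. lam i * Bf i m) * mn m)" by (simp add: sum_distrib_right)
    also have "\<dots> = 0" using lam(3) by simp
    finally have s2: "(\<Sum>i\<le>N. lam i * (\<Sum>m\<in>M. Bf i m * mn m)) = 0" .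
    have "X = (\<Sum>i\<le>N. lam i * (cc ^ E * y ^ i)) - (\<Sum>i\<le>N. lam i * (\<Sum>m\<in>M. Bf i m * mn m))"
      unfolding X_def by (simp add: right_diff_distrib sum_subtractf)
    then have "X = cc ^ E * P" using s1 s2 by simp
    then have cP: "cc ^ E * P \<in> Q" using XQ by simp
    have ccE: "cc ^ E \<in> PB S" using cc_PB by auto
    have "cc ^ E \<notin> Q"
    proof
      assume "cc ^ E \<in> Q"
      then have "cc ^ E = 0" using indQ ccE by blast
      then show False using cc_nz by simp
    qed
    moreover have "P \<in> PB {1..n}" unfolding P_def
    proof (rule PB_sum)
      fix i assume "i \<in> {..N}"
      then have "lam i \<in> PB {1..n}" using lam(1) PBS_sub by blast
      then show "lam i * y ^ i \<in> PB {1..n}" using y by auto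
    qed
    ultimately have PQ: "P \<in> Q" using pr_prime[OF Q PBS_sub[OF ccE] _ cP] by blast
    define lam' where "lam' i = (if i \<le> N then lam i else 0)" for i
    have "P = (\<Sum>i\<le>N. lam' i * y ^ i)" unfolding P_def by (rule sum.cong) (auto simp: lam'_def)
    then have P'Q: "(\<Sum>i\<le>N. lam' i * y ^ i) \<in> Q" using PQ by simp
    have l'S: "lam' i \<in> PB S" for i using lam(1) by (auto simp: lam'_def)
    have "\<forall>i\<le>N. lam' i \<in> Q'"
    proof (rule strip_lemma[OF Q pr_ideal[OF Q'] QQ y yQ yQ'])
      show "\<And>i. lam' i \<in> PB {1..n}" using l'S by (rule PBS_sub)
      show "\<And>i. lam' i \<in> Q' \<Longrightarrow> lam' i \<in> Q"
        using indQ' l'S id_0[OF QI] by metis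
      show "(\<Sum>i\<le>N. lam' i * y ^ i) \<in> Q" by (rule P'Q)
    qed
    then have "\<forall>i\<le>N. lam i = 0" using indQ' l'S by (metis lam'_def)
    then show False using lam(2) by auto
  qed
qed


end


theorem key_lemma:
  fixes Q Q' :: "('a::field) mpoly set"
  assumes Q: "primeideal Q (poly_ring n)" and Q': "primeideal Q' (poly_ring n)" and QQ: "Q \<subseteq> Q'"
    and indQ': "indep n Q' S" and mx: "\<forall>j\<in>{1..n} - S. \<not> indep n Q (insert j S)"
  shows "Q' \<subseteq> Q"
proof -
  have indQ: "indep n Q S" using indQ' QQ by (auto simp: indep_def)
  have ex: "\<forall>j\<in>{1..n} - S. \<exists>t. fst t \<ge> 1 \<and> fst (snd t) \<in> PB S \<and> fst (snd t) \<noteq> 0 \<and> (\<forall>i. snd (snd t) i \<in> PB S) \<and>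
              fst (snd t) * var j ^ fst t + (\<Sum>i<fst t. snd (snd t) i * var j ^ i) \<in> Q"
  proof
    fix j assume j: "j \<in> {1..n} - S"
    obtain d c h where "d \<ge> 1 \<and> c \<in> PB S \<and> c \<noteq> 0 \<and> (\<forall>i. h i \<in> PB S) \<and>
              c * var j ^ d + (\<Sum>i<d. h i * var j ^ i) \<in> Q"
      using alg_rel[OF indQ _ _ mx[rule_format, OF j]] j by blast
    then show "\<exists>t. fst t \<ge> 1 \<and> fst (snd t) \<in> PB S \<and> fst (snd t) \<noteq> 0 \<and> (\<forall>i. snd (snd t) i \<in> PB S) \<and>
              fst (snd t) * var j ^ fst t + (\<Sum>i<fst t. snd (snd t) i * var j ^ i) \<in> Q"
      by (intro exI[of _ "(d, c, h)"]) simp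
  qed
  obtain T where T: "\<And>j. j \<in> {1..n} - S \<Longrightarrow> fst (T j) \<ge> 1 \<and> fst (snd (T j)) \<in> PB S \<and> fst (snd (T j)) \<noteq> 0 \<and>
      (\<forall>i. snd (snd (T j)) i \<in> PB S) \<and>
      fst (snd (T j)) * var j ^ fst (T j) + (\<Sum>i<fst (T j). snd (snd (T j)) i * var j ^ i) \<in> Q"
    using bchoice[OF ex] by blast
  have kc: "keyctx n Q S (\<lambda>j. fst (T j)) (\<lambda>j. fst (snd (T j))) (\<lambda>j. snd (snd (T j)))"
    apply (rule keyctx.intro[OF Q])
    subgoal using indQ by (simp add: indep_def)
    subgoal using indQ by (simp add: indep_def)
    subgoal using T by blast
    subgoal using T by blast
    subgoal using T by blast
    subgoal using T by blast
    subgoal using T by blast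
    done
  interpret keyctx n Q S "\<lambda>j. fst (T j)" "\<lambda>j. fst (snd (T j))" "\<lambda>j. snd (snd (T j))" by (rule kc)
  show ?thesis by (rule key[OF Q' QQ]) (use indQ' in \<open>auto simp: indep_def\<close>)
qed

definition tdeg :: "nat \<Rightarrow> ('a::field) mpoly set \<Rightarrow> nat" where
  "tdeg n Q = Max (card ` {S. indep n Q S})"

lemma indep_empty:
  fixes Q :: "('a::field) mpoly set"
  assumes Q: "primeideal Q (poly_ring n)" shows "indep n Q {}"
proof -
  have "p = 0" if p: "p \<in> PB {}" "p \<in> Q" for p :: "'a mpoly"
  proof -
    have k0: "m = 0" if "m \<in> Poly_Mapping.keys p" for m
      using p(1) that by (auto simp: PB_def vars_def)
    have pe: "p = Poly_Mapping.single 0 (Poly_Mapping.lookup p 0)"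
    proof (rule poly_mapping_eqI)
      fix k
      show "Poly_Mapping.lookup p k = Poly_Mapping.lookup (Poly_Mapping.single 0 (Poly_Mapping.lookup p 0)) k"
      proof (cases "k = 0")
        case True then show ?thesis by simp
      next
        case False
        then have "k \<notin> Poly_Mapping.keys p" using k0 by blast
        then show ?thesis using False by (simp add: in_keys_iff lookup_single)
      qed
    qed
    show "p = 0"
    proof (rule ccontr)
      assume "p \<noteq> 0"
      then have a: "Poly_Mapping.lookup p 0 \<noteq> 0" using pe by auto
      have "Poly_Mapping.single 0 (inverse (Poly_Mapping.lookup p 0)) * p \<in> Q"
        by (rule id_mult[OF pr_ideal[OF Q] p(2)]) (rule PB_single, simp)
      moreover have "Poly_Mapping.single 0 (inverse (Poly_Mapping.lookup p 0)) * p = 1"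
        using a by (subst pe) (simp add: mult_single)
      ultimately show False using pr_one[OF Q] by simp
    qed
  qed
  then show ?thesis by (auto simp: indep_def)
qed

lemma indep_finite: "finite (card ` {S. indep n Q S})"
proof -
  have "{S. indep n Q S} \<subseteq> Pow {1..n}" by (auto simp: indep_def)
  then show ?thesis by (meson finite_Pow_iff finite_atLeastAtMost finite_imageI finite_subset)
qed

lemma tdeg_ge: "indep n Q S \<Longrightarrow> card S \<le> tdeg n Q"
  unfolding tdeg_def using indep_finite by (intro Max_ge) auto

lemma tdeg_le_n: "primeideal Q (poly_ring n) \<Longrightarrow> tdeg n Q \<le> n"
proof -
  assume Q: "primeideal Q (poly_ring n)"
  have "card ` {S. indep n Q S} \<noteq> {}" using indep_empty[OF Q] by blast
  then have "tdeg n Q \<in> card ` {S. indep n Q S}" unfolding tdeg_def using indep_finite by (rule Max_in[rotated])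
  then obtain S where "indep n Q S" "tdeg n Q = card S" by blast
  then have "card S \<le> card {1..n}" by (intro card_mono) (auto simp: indep_def)
  then show ?thesis using \<open>tdeg n Q = card S\<close> by simp
qed

lemma tdeg_attained: "primeideal Q (poly_ring n) \<Longrightarrow> \<exists>S. indep n Q S \<and> card S = tdeg n Q"
proof -
  assume Q: "primeideal Q (poly_ring n)"
  have "card ` {S. indep n Q S} \<noteq> {}" using indep_empty[OF Q] by blast
  then have "tdeg n Q \<in> card ` {S. indep n Q S}" unfolding tdeg_def using indep_finite by (rule Max_in[rotated])
  then show ?thesis by auto
qed

lemma tdeg_strict:
  fixes Q Q' :: "('a::field) mpoly set"
  assumes Q: "primeideal Q (poly_ring n)" and Q': "primeideal Q' (poly_ring n)" and QQ: "Q \<subset> Q'"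
  shows "tdeg n Q' < tdeg n Q"
proof (rule ccontr)
  assume "\<not> tdeg n Q' < tdeg n Q"
  then have le: "tdeg n Q \<le> tdeg n Q'" by simp
  obtain S where S: "indep n Q' S" "card S = tdeg n Q'" using tdeg_attained[OF Q'] by blast
  have fS: "finite S" using S(1) by (auto simp: indep_def intro: finite_subset)
  have "\<forall>j\<in>{1..n} - S. \<not> indep n Q (insert j S)"
  proof (intro ballI notI)
    fix j assume j: "j \<in> {1..n} - S" and ind: "indep n Q (insert j S)"
    have "card (insert j S) = Suc (card S)" using fS j by simp
    then show False using tdeg_ge[OF ind] le S(2) by simp
  qed
  then have "Q' \<subseteq> Q" using key_lemma[OF Q Q' _ S(1)] QQ by blast
  then show False using QQ by blast
qed

lemma tdeg_PC: "C \<subseteq> {1..n} \<Longrightarrow> n - card C \<le> tdeg n (PC n C :: ('a::field) mpoly set)"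
proof -
  assume C: "C \<subseteq> {1..n}"
  have "indep n (PC n C :: 'a mpoly set) ({1..n} - C)"
    unfolding indep_def using PC_PB_zero by blast
  then have "card ({1..n} - C) \<le> tdeg n (PC n C :: 'a mpoly set)" by (rule tdeg_ge)
  moreover have "card ({1..n} - C) = card {1..n} - card C"
    using C by (intro card_Diff_subset) (auto intro: finite_subset)
  ultimately show ?thesis by simp
qed

lemma height_PC_le:
  assumes C: "C \<subseteq> {1..n}"
  shows "height (poly_ring n :: ('a::field) mpoly ring) (PC n C) \<le> enat (card C)"
  unfolding height_def
proof (rule SUP_least)
  fix k assume "k \<in> {k. \<exists>Q. (\<forall>i\<le>k. primeideal (Q i) (poly_ring n :: 'a mpoly ring)) \<and> (\<forall>i<k. Q i \<subset> Q (Suc i)) \<and> Q k = PC n C}"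
  then obtain Q :: "nat \<Rightarrow> 'a mpoly set" where Q: "\<forall>i\<le>k. primeideal (Q i) (poly_ring n)" "\<forall>i<k. Q i \<subset> Q (Suc i)" "Q k = PC n C"
    by blast
  have "\<forall>i\<le>k. tdeg n (PC n C :: 'a mpoly set) + i \<le> tdeg n (Q (k - i))"
  proof (intro allI impI)
    fix i assume "i \<le> k"
    then show "tdeg n (PC n C :: 'a mpoly set) + i \<le> tdeg n (Q (k - i))"
    proof (induction i)
      case 0 then show ?case using Q(3) by simp
    next
      case (Suc i)
      have eq: "Suc (k - Suc i) = k - i" using Suc.prems by simp
      have "Q (k - Suc i) \<subset> Q (Suc (k - Suc i))" using Q(2) Suc.prems by simp
      then have "tdeg n (Q (k - i)) < tdeg n (Q (k - Suc i))"
        using tdeg_strict[of "Q (k - Suc i)" n "Q (k - i)"] Q(1) eq by simp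
      then show ?case using Suc by simp
    qed
  qed
  then have "tdeg n (PC n C :: 'a mpoly set) + k \<le> tdeg n (Q (k - k))" by blast
  then have "tdeg n (PC n C :: 'a mpoly set) + k \<le> tdeg n (Q 0)" by simp
  moreover have "tdeg n (Q 0) \<le> n" using Q(1) by (intro tdeg_le_n) simp
  moreover have "n - card C \<le> tdeg n (PC n C :: 'a mpoly set)" by (rule tdeg_PC[OF C])
  moreover have "card C \<le> card {1..n}" using C by (intro card_mono) auto
  ultimately have "k \<le> card C" by simp
  then show "enat k \<le> enat (card C)" by simp
qed

lemma height_PC_ge:
  assumes C: "C \<subseteq> {1..n}"
  shows "enat (card C) \<le> height (poly_ring n :: ('a::field) mpoly ring) (PC n C)"
  unfolding height_def
proof (rule SUP_upper)
  have fC: "finite C" using C by (rule finite_subset) simp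
  define xs where "xs = sorted_list_of_set C"
  have xs: "distinct xs" "set xs = C" "length xs = card C" using fC by (simp_all add: xs_def)
  define Q where "Q i = (PC n (set (take i xs)) :: 'a mpoly set)" for i
  have "\<forall>i\<le>card C. primeideal (Q i) (poly_ring n)" by (simp add: Q_def PC_prime)
  moreover have "\<forall>i<card C. Q i \<subset> Q (Suc i)"
  proof (intro allI impI)
    fix i assume i: "i < card C"
    have tk: "take (Suc i) xs = take i xs @ [xs ! i]" using i xs(3) by (simp add: take_Suc_conv_app_nth)
    have "distinct (take (Suc i) xs)" using xs(1) by (rule distinct_take)
    then have "xs ! i \<notin> set (take i xs)" unfolding tk by simp
    moreover have "set (take (Suc i) xs) = insert (xs ! i) (set (take i xs))" by (simp add: tk)
    ultimately have "set (take i xs) \<subset> set (take (Suc i) xs)" by blast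
    moreover have "set (take (Suc i) xs) \<subseteq> {1..n}"
      using set_take_subset[of "Suc i" xs] C unfolding xs(2) by (rule order_trans)
    ultimately show "Q i \<subset> Q (Suc i)" unfolding Q_def by (rule PC_strict)
  qed
  moreover have "Q (card C) = PC n C" using xs by (simp add: Q_def)
  ultimately show "card C \<in> {k. \<exists>Q. (\<forall>i\<le>k. primeideal (Q i) (poly_ring n :: 'a mpoly ring)) \<and> (\<forall>i<k. Q i \<subset> Q (Suc i)) \<and> Q k = PC n C}"
    by (intro CollectI exI[of _ Q] conjI)
qed


definition cover :: "nat \<Rightarrow> nat set \<Rightarrow> bool" where
  "cover n C \<longleftrightarrow> C \<subseteq> {1..n} \<and> (\<forall>i j. {i, j} \<in> L2_edges n \<longrightarrow> i \<in> C \<or> j \<in> C)"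

definition mincover :: "nat \<Rightarrow> nat set \<Rightarrow> bool" where
  "mincover n C \<longleftrightarrow> cover n C \<and> (\<forall>D. D \<subset> C \<longrightarrow> \<not> cover n D)"

lemma edge_iff:
  "{i, j} \<in> L2_edges n \<longleftrightarrow> i \<in> {1..n} \<and> j \<in> {1..n} \<and> (j = i+1 \<or> j = i+2 \<or> i = j+1 \<or> i = j+2)"
proof
  assume "{i, j} \<in> L2_edges n"
  then obtain a where "({i, j} = {a, a+1} \<and> 1 \<le> a \<and> a \<le> n - 1) \<or> ({i, j} = {a, a+2} \<and> 1 \<le> a \<and> a + 2 \<le> n)"
    unfolding L2_edges_def by blast
  then show "i \<in> {1..n} \<and> j \<in> {1..n} \<and> (j = i+1 \<or> j = i+2 \<or> i = j+1 \<or> i = j+2)"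
    by (auto simp: doubleton_eq_iff)
next
  assume a: "i \<in> {1..n} \<and> j \<in> {1..n} \<and> (j = i+1 \<or> j = i+2 \<or> i = j+1 \<or> i = j+2)"
  show "{i, j} \<in> L2_edges n"
  proof -
    have "j = i+1 \<or> j = i+2 \<or> i = j+1 \<or> i = j+2" using a by blast
    moreover
    { assume "j = i + 1" then have "{i,j} \<in> {{i, i+1} | i. 1 \<le> i \<and> i \<le> n - 1}" using a by auto }
    moreover
    { assume "j = i + 2" then have "{i,j} \<in> {{i, i+2} | i. 1 \<le> i \<and> i + 2 \<le> n}" using a by auto }
    moreover
    { assume "i = j + 1" then have "{i,j} \<in> {{i, i+1} | i. 1 \<le> i \<and> i \<le> n - 1}" using a
        by (intro CollectI exI[of _ j]) (auto simp: insert_commute) }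
    moreover
    { assume "i = j + 2" then have "{i,j} \<in> {{i, i+2} | i. 1 \<le> i \<and> i + 2 \<le> n}" using a
        by (intro CollectI exI[of _ j]) (auto simp: insert_commute) }
    ultimately show ?thesis unfolding L2_edges_def by blast
  qed
qed

lemma ceil5: "nat \<lceil>real n / 5\<rceil> = (n + 4) div 5"
proof -
  define q where "q = (n + 4) div 5"
  have "5 * q \<le> n + 4" "n + 4 < 5 * q + 5" unfolding q_def by linarith+
  then have "real q - 1 < real n / 5" "real n / 5 \<le> real q" by linarith+
  then have "\<lceil>real n / 5\<rceil> = int q" by (intro ceiling_unique) auto
  then show ?thesis by (simp add: q_def)
qed

lemma mincover_bound:
  assumes mc: "mincover n C"
  shows "card C + (n + 4) div 5 \<le> n"
proof -
  have cov: "cover n C" using mc by (simp add: mincover_def)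
  have Cn: "C \<subseteq> {1..n}" using cov by (simp add: cover_def)
  define U where "U = {1..n} - C"
  have dom: "\<exists>u\<in>U. v \<in> {u-2..u+2}" if v: "v \<in> {1..n}" for v
  proof (cases "v \<in> C")
    case False then show ?thesis using v by (intro bexI[of _ v]) (auto simp: U_def)
  next
    case True
    have "C - {v} \<subset> C" using True by blast
    then have "\<not> cover n (C - {v})" using mc by (simp add: mincover_def)
    then obtain i j where e: "{i, j} \<in> L2_edges n" "i \<notin> C - {v}" "j \<notin> C - {v}"
      using Cn by (auto simp: cover_def)
    have ij: "i \<in> {1..n}" "j \<in> {1..n}" "j = i+1 \<or> j = i+2 \<or> i = j+1 \<or> i = j+2"
      using e(1) by (simp_all add: edge_iff)
    have "i \<in> C \<or> j \<in> C" using cov e(1) by (simp add: cover_def)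
    then show ?thesis
    proof
      assume "i \<in> C"
      then have "i = v" using e(2) by blast
      then have "j \<notin> C" using e(3) ij(3) by auto
      then show ?thesis using ij \<open>i = v\<close> by (intro bexI[of _ j]) (auto simp: U_def)
    next
      assume "j \<in> C"
      then have "j = v" using e(3) by blast
      then have "i \<notin> C" using e(2) ij(3) by auto
      then show ?thesis using ij \<open>j = v\<close> by (intro bexI[of _ i]) (auto simp: U_def)
    qed
  qed
  have fU: "finite U" by (simp add: U_def)
  have "{1..n} \<subseteq> (\<Union>u\<in>U. {u-2..u+2})" using dom by blast
  then have "card {1..n} \<le> card (\<Union>u\<in>U. {u-2..u+2})" by (intro card_mono) (auto simp: fU)
  also have "\<dots> \<le> (\<Sum>u\<in>U. card {u-2..u+2})" by (rule card_UN_le[OF fU])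
  also have "\<dots> \<le> (\<Sum>u\<in>U. 5)" by (intro sum_mono) simp
  also have "\<dots> = 5 * card U" by simp
  finally have "n \<le> 5 * card U" by simp
  then have "(n + 4) div 5 \<le> card U" by linarith
  moreover have "card U = n - card C" unfolding U_def using Cn
    by (subst card_Diff_subset) (auto intro: finite_subset)
  moreover have "card C \<le> n" using card_mono[OF _ Cn] by simp
  ultimately show ?thesis by linarith
qed

lemma mod5a: "((w::nat) + 2) mod 5 = 0 \<Longrightarrow> w mod 5 = 3" by presburger
lemma mod5b: "((w::nat) + 1) mod 5 = 4 \<Longrightarrow> w mod 5 = 3" by presburger

lemma exists_big_mincover:
  assumes n: "n \<ge> 1"
  shows "\<exists>C. mincover n C \<and> n \<le> card C + (n + 4) div 5"
proof -
  define U0 where "U0 = {i\<in>{1..n}. i mod 5 = 3} \<union> (if n mod 5 = 1 \<or> n mod 5 = 2 then {n} else {})"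
  define C0 where "C0 = {1..n} - U0"
  have U0n: "U0 \<subseteq> {1..n}" using n by (auto simp: U0_def)
  have U0_char: "u \<in> U0 \<longleftrightarrow> u \<in> {1..n} \<and> (u mod 5 = 3 \<or> (u = n \<and> (n mod 5 = 1 \<or> n mod 5 = 2)))" for u
    using n by (auto simp: U0_def)
  have indep: "\<not> (i \<in> U0 \<and> j \<in> U0)" if "{i, j} \<in> L2_edges n" for i j
  proof
    assume ij: "i \<in> U0 \<and> j \<in> U0"
    have e: "i \<le> n" "j \<le> n" "j = i+1 \<or> j = i+2 \<or> i = j+1 \<or> i = j+2"
      using that by (simp_all add: edge_iff)
    have "i mod 5 = 3 \<or> (i = n \<and> (n mod 5 = 1 \<or> n mod 5 = 2))"
         "j mod 5 = 3 \<or> (j = n \<and> (n mod 5 = 1 \<or> n mod 5 = 2))"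
      using ij U0_char by blast+
    then show False using e by (elim disjE conjE; simp?; presburger)
  qed
  have cov: "cover n C0"
    unfolding cover_def
  proof (intro conjI allI impI)
    show "C0 \<subseteq> {1..n}" by (auto simp: C0_def)
    fix i j assume e: "{i, j} \<in> L2_edges n"
    then have "i \<in> {1..n}" "j \<in> {1..n}" by (simp_all add: edge_iff)
    then show "i \<in> C0 \<or> j \<in> C0" using indep[OF e] by (auto simp: C0_def)
  qed
  have dom: "\<exists>u\<in>U0. u = v+1 \<or> u = v+2 \<or> v = u+1 \<or> v = u+2" if v: "v \<in> {1..n}" "v \<notin> U0" for v
  proof -
    have vm: "v mod 5 \<noteq> 3" using v U0_char by blast
    have vn: "\<not> (v = n \<and> (n mod 5 = 1 \<or> n mod 5 = 2))" using v U0_char by blast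
    consider "v mod 5 = 0" | "v mod 5 = 1" | "v mod 5 = 2" | "v mod 5 = 4" using vm by linarith
    then show ?thesis
    proof cases
      case 1
      have "v \<ge> 1" using v by simp
      then have "v \<ge> 5" using 1 by presburger
      moreover have "(v - 2) mod 5 = 3"
      proof -
        have e: "(v - 2) + 2 = v" using \<open>v \<ge> 5\<close> by simp
        have "((v - 2) + 2) mod 5 = 0" unfolding e by (rule 1)
        then show ?thesis by (rule mod5a)
      qed
      moreover have "v - 2 \<in> {1..n}" using v(1) \<open>v \<ge> 5\<close> by auto
      ultimately have "v - 2 \<in> U0" using U0_char by blast
      moreover have "v = (v - 2) + 2" using \<open>v \<ge> 5\<close> by simp
      ultimately show ?thesis by blast
    next
      case 2
      show ?thesis
      proof (cases "v + 2 \<le> n")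
        case True
        moreover have "(v + 2) mod 5 = 3" using 2 by presburger
        moreover have "v + 2 \<in> {1..n}" using True by simp
        ultimately have "v + 2 \<in> U0" using U0_char by blast
        then show ?thesis by blast
      next
        case False
        have "v \<noteq> n" using vn 2 by auto
        then have "n = v + 1" using v False by simp
        moreover have "n mod 5 = 2" using 2 \<open>n = v + 1\<close> by presburger
        moreover have "n \<in> {1..n}" using v by simp
        ultimately have "n \<in> U0" using U0_char by blast
        then show ?thesis using \<open>n = v + 1\<close> by blast
      qed
    next
      case 3
      show ?thesis
      proof (cases "v + 1 \<le> n")
        case True
        moreover have "(v + 1) mod 5 = 3" using 3 by presburger
        moreover have "v + 1 \<in> {1..n}" using True by simp
        ultimately have "v + 1 \<in> U0" using U0_char by blast
        then show ?thesis by blast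
      next
        case False
        then have "n = v" using v by simp
        then show ?thesis using vn 3 by simp
      qed
    next
      case 4
      have "v \<ge> 1" using v by simp
      then have "v \<ge> 4" using 4 by presburger
      moreover have "(v - 1) mod 5 = 3"
      proof -
        have e: "(v - 1) + 1 = v" using \<open>v \<ge> 4\<close> by simp
        have "((v - 1) + 1) mod 5 = 4" unfolding e by (rule 4)
        then show ?thesis by (rule mod5b)
      qed
      moreover have "v - 1 \<in> {1..n}" using v(1) \<open>v \<ge> 4\<close> by auto
      ultimately have "v - 1 \<in> U0" using U0_char by blast
      moreover have "v = (v - 1) + 1" using \<open>v \<ge> 4\<close> by simp
      ultimately show ?thesis by blast
    qed
  qed
  have mc: "mincover n C0"
    unfolding mincover_def
  proof (intro conjI allI impI)
    show "cover n C0" by (rule cov)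
    fix D assume D: "D \<subset> C0"
    show "\<not> cover n D"
    proof
      assume cD: "cover n D"
      obtain v where v: "v \<in> C0" "v \<notin> D" using D by blast
      then have v1: "v \<in> {1..n}" "v \<notin> U0" by (auto simp: C0_def)
      obtain u where u: "u \<in> U0" "u = v+1 \<or> u = v+2 \<or> v = u+1 \<or> v = u+2" using dom[OF v1] by blast
      have "{u, v} \<in> L2_edges n" using u v1 U0n by (auto simp: edge_iff)
      then have "u \<in> D \<or> v \<in> D" using cD by (simp add: cover_def)
      moreover have "u \<notin> D" using u D by (auto simp: C0_def)
      ultimately show False using v by blast
    qed
  qed
  have "inj_on (\<lambda>i. i div 5) U0"
  proof (rule inj_onI)
    fix i j assume ij: "i \<in> U0" "j \<in> U0" "i div 5 = j div 5"
    have "i mod 5 = 3 \<or> (i = n \<and> (n mod 5 = 1 \<or> n mod 5 = 2))" "i \<le> n"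
         "j mod 5 = 3 \<or> (j = n \<and> (n mod 5 = 1 \<or> n mod 5 = 2))" "j \<le> n"
      using ij U0_char by auto
    moreover have "i = 5 * (i div 5) + i mod 5" "j = 5 * (j div 5) + j mod 5" "n = 5 * (n div 5) + n mod 5"
      by simp_all
    ultimately show "i = j" using ij(3) by (elim disjE conjE; (hypsubst_thin)?; linarith)
  qed
  moreover have "(\<lambda>i. i div 5) ` U0 \<subseteq> {..<(n + 4) div 5}"
  proof
    fix x assume "x \<in> (\<lambda>i. i div 5) ` U0"
    then obtain i where i: "i \<in> U0" "x = i div 5" by blast
    have "i mod 5 = 3 \<or> (i = n \<and> (n mod 5 = 1 \<or> n mod 5 = 2))" "i \<le> n" using i U0_char by auto
    moreover have "i = 5 * (i div 5) + i mod 5" "n = 5 * (n div 5) + n mod 5"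
      "n + 4 = 5 * ((n + 4) div 5) + (n + 4) mod 5" "(n + 4) mod 5 < 5" by simp_all
    ultimately have "i div 5 < (n + 4) div 5" by (elim disjE conjE; (hypsubst_thin)?; linarith)
    then show "x \<in> {..<(n + 4) div 5}" using i by simp
  qed
  ultimately have "card U0 \<le> card {..<(n + 4) div 5}" by (intro card_inj_on_le) auto
  then have cU: "card U0 \<le> (n + 4) div 5" by simp
  have "card C0 = n - card U0" unfolding C0_def using U0n
    by (subst card_Diff_subset) (auto intro: finite_subset)
  moreover have "card U0 \<le> n" using card_mono[OF _ U0n] by simp
  ultimately have "n \<le> card C0 + (n + 4) div 5" using cU by linarith
  then show ?thesis using mc by blast
qed



definition G :: "nat \<Rightarrow> ('a::field) mpoly set" where
  "G n = {var i * var j | i j. {i, j} \<in> L2_edges n}"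

lemma var_mult: "(var i * var j :: ('a::field) mpoly) = Poly_Mapping.single (Poly_Mapping.single i 1 + Poly_Mapping.single j 1) 1"
  by (simp add: var_def mult_single)

lemma keys_ij: "Poly_Mapping.keys (Poly_Mapping.single i (1::nat) + Poly_Mapping.single j 1) = {i, j}"
  by (auto simp: keys_add_nat)

lemma G_PB: "G n \<subseteq> (PB {1..n} :: ('a::field) mpoly set)"
proof
  fix x :: "'a mpoly" assume "x \<in> G n"
  then obtain i j where ij: "x = var i * var j" "{i, j} \<in> L2_edges n" by (auto simp: G_def)
  then have "i \<in> {1..n}" "j \<in> {1..n}" by (simp_all add: edge_iff)
  then have "(var i :: 'a mpoly) \<in> PB {1..n}" "(var j :: 'a mpoly) \<in> PB {1..n}" by (simp_all add: var_PB)
  then show "x \<in> PB {1..n}" using ij(1) by (simp add: PB_mult)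
qed

lemma edge_ideal_eq: "edge_ideal n (L2_edges n) = genideal (poly_ring n) (G n :: ('a::field) mpoly set)"
  by (simp add: edge_ideal_def G_def)

lemma I_sub:
  fixes J :: "('a::field) mpoly set"
  assumes J: "ideal J (poly_ring n)" and GJ: "G n \<subseteq> J"
  shows "edge_ideal n (L2_edges n) \<subseteq> J"
proof -
  interpret cring "poly_ring n :: 'a mpoly ring" by (rule cring_pr)
  show ?thesis unfolding edge_ideal_eq by (rule genideal_minimal[OF J GJ])
qed

lemma G_sub_I: "G n \<subseteq> (edge_ideal n (L2_edges n) :: ('a::field) mpoly set)"
proof -
  interpret cring "poly_ring n :: 'a mpoly ring" by (rule cring_pr)
  have "G n \<subseteq> carrier (poly_ring n :: 'a mpoly ring)" using G_PB[where 'a='a] by (simp add: carrier_pr)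
  then show ?thesis unfolding edge_ideal_eq by (rule genideal_self)
qed

lemma cover_of_prime:
  fixes P :: "('a::field) mpoly set"
  assumes P: "primeideal P (poly_ring n)" and IP: "edge_ideal n (L2_edges n) \<subseteq> P"
  shows "cover n {i \<in> {1..n}. var i \<in> P}"
  unfolding cover_def
proof (intro conjI allI impI)
  show "{i \<in> {1..n}. var i \<in> P} \<subseteq> {1..n}" by blast
  fix i j assume e: "{i, j} \<in> L2_edges n"
  then have ij: "i \<in> {1..n}" "j \<in> {1..n}" by (simp_all add: edge_iff)
  have "(var i * var j :: 'a mpoly) \<in> G n" using e by (auto simp: G_def)
  then have "(var i * var j :: 'a mpoly) \<in> P" using G_sub_I IP by blast
  then have "var i \<in> P \<or> var j \<in> P" using pr_prime[OF P] ij var_PB by blast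
  then show "i \<in> {i \<in> {1..n}. var i \<in> P} \<or> j \<in> {i \<in> {1..n}. var i \<in> P}" using ij by blast
qed

lemma I_sub_PC:
  assumes "cover n C"
  shows "edge_ideal n (L2_edges n) \<subseteq> (PC n C :: ('a::field) mpoly set)"
proof (rule I_sub[OF PC_ideal])
  show "G n \<subseteq> (PC n C :: 'a mpoly set)"
  proof
    fix x :: "'a mpoly" assume "x \<in> G n"
    then obtain i j where ij: "x = var i * var j" "{i, j} \<in> L2_edges n" by (auto simp: G_def)
    have "i \<in> C \<or> j \<in> C" using assms ij(2) by (simp add: cover_def)
    moreover have "x \<in> PB {1..n}" using \<open>x \<in> G n\<close> G_PB by blast
    moreover have "Poly_Mapping.keys x = {Poly_Mapping.single i 1 + Poly_Mapping.single j 1}"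
      using ij(1) by (simp add: var_mult)
    moreover have "Poly_Mapping.keys (Poly_Mapping.single i 1 + Poly_Mapping.single j (1::nat)) \<inter> C \<noteq> {}"
      unfolding keys_ij using \<open>i \<in> C \<or> j \<in> C\<close> by blast
    ultimately show "x \<in> PC n C" unfolding PC_def by simp
  qed
qed

lemma minprime_PC:
  fixes P :: "('a::field) mpoly set"
  assumes P: "P \<in> minimal_primes (poly_ring n) (edge_ideal n (L2_edges n))"
  shows "\<exists>C. mincover n C \<and> P = PC n C"
proof -
  have Pp: "primeideal P (poly_ring n)" and IP: "edge_ideal n (L2_edges n) \<subseteq> P"
    and mn: "\<And>Q. primeideal Q (poly_ring n) \<Longrightarrow> edge_ideal n (L2_edges n) \<subseteq> Q \<Longrightarrow> Q \<subseteq> P \<Longrightarrow> Q = P"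
    using P by (auto simp: minimal_primes_def)
  define C where "C = {i \<in> {1..n}. var i \<in> P}"
  have cov: "cover n C" unfolding C_def by (rule cover_of_prime[OF Pp IP])
  have sub: "PC n C \<subseteq> P" by (rule PC_sub[OF pr_ideal[OF Pp]]) (auto simp: C_def)
  have eq: "PC n C = P" by (rule mn[OF PC_prime I_sub_PC[OF cov] sub])
  have "mincover n C"
    unfolding mincover_def
  proof (intro conjI allI impI)
    show "cover n C" by (rule cov)
    fix D assume D: "D \<subset> C"
    show "\<not> cover n D"
    proof
      assume cD: "cover n D"
      have Cn: "C \<subseteq> {1..n}" by (auto simp: C_def)
      have "(PC n D :: 'a mpoly set) \<subset> PC n C" by (rule PC_strict[OF D Cn])
      moreover have "(PC n D :: 'a mpoly set) = P"
        using PC_strict[OF D Cn] eq by (intro mn[OF PC_prime I_sub_PC[OF cD]]) blast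
      ultimately show False using eq by simp
    qed
  qed
  then show ?thesis using eq by blast
qed

lemma PC_minprime:
  assumes mc: "mincover n C"
  shows "(PC n C :: ('a::field) mpoly set) \<in> minimal_primes (poly_ring n) (edge_ideal n (L2_edges n))"
proof -
  have cov: "cover n C" using mc by (simp add: mincover_def)
  have Cn: "C \<subseteq> {1..n}" using cov by (simp add: cover_def)
  have "Q = PC n C" if Q: "primeideal Q (poly_ring n)" "edge_ideal n (L2_edges n) \<subseteq> Q" "Q \<subseteq> PC n C"
    for Q :: "'a mpoly set"
  proof -
    define C' where "C' = {i \<in> {1..n}. var i \<in> Q}"
    have cov': "cover n C'" unfolding C'_def by (rule cover_of_prime[OF Q(1,2)])
    have "C' \<subseteq> C"
    proof
      fix i assume "i \<in> C'"
      then have i: "i \<in> {1..n}" "var i \<in> Q" by (auto simp: C'_def)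
      then have "(var i :: 'a mpoly) \<in> PC n C" using Q(3) by blast
      then show "i \<in> C" using var_in_PC_iff[OF i(1)] by blast
    qed
    then have "C' = C" using mc cov' by (auto simp: mincover_def)
    then have "PC n C \<subseteq> Q" by (intro PC_sub[OF pr_ideal[OF Q(1)]]) (auto simp: C'_def)
    then show ?thesis using Q(3) by blast
  qed
  then show ?thesis unfolding minimal_primes_def using PC_prime I_sub_PC[OF cov] by blast
qed

theorem main_result:
  fixes n :: nat
  assumes "n \<ge> 3"
  shows "big_height (poly_ring n :: ('a::field) mpoly ring) (edge_ideal n (L2_edges n))
           = enat (n - nat \<lceil>real n / 5\<rceil>)"
proof -
  define q where "q = (n + 4) div 5"
  have qq: "nat \<lceil>real n / 5\<rceil> = q" unfolding q_def by (rule ceil5)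
  have le: "big_height (poly_ring n :: 'a mpoly ring) (edge_ideal n (L2_edges n)) \<le> enat (n - q)"
    unfolding big_height_def
  proof (rule SUP_least)
    fix P :: "'a mpoly set" assume "P \<in> minimal_primes (poly_ring n) (edge_ideal n (L2_edges n))"
    then obtain C where C: "mincover n C" "P = PC n C" using minprime_PC by blast
    have Cn: "C \<subseteq> {1..n}" using C(1) by (simp add: mincover_def cover_def)
    have "height (poly_ring n :: 'a mpoly ring) P \<le> enat (card C)" using height_PC_le[OF Cn] C(2) by simp
    moreover have "card C \<le> n - q" using mincover_bound[OF C(1)] by (simp add: q_def)
    ultimately show "height (poly_ring n :: 'a mpoly ring) P \<le> enat (n - q)" by (meson enat_ord_simps(1) order_trans)
  qed
  obtain C0 where C0: "mincover n C0" "n \<le> card C0 + q"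
    using exists_big_mincover[of n] assms by (auto simp: q_def)
  have C0n: "C0 \<subseteq> {1..n}" using C0(1) by (simp add: mincover_def cover_def)
  have ge: "enat (n - q) \<le> big_height (poly_ring n :: 'a mpoly ring) (edge_ideal n (L2_edges n))"
    unfolding big_height_def
  proof (rule SUP_upper2[OF PC_minprime[OF C0(1)]])
    have "enat (n - q) \<le> enat (card C0)" using C0(2) by simp
    also have "\<dots> \<le> height (poly_ring n :: 'a mpoly ring) (PC n C0)" by (rule height_PC_ge[OF C0n])
    finally show "enat (n - q) \<le> height (poly_ring n :: 'a mpoly ring) (PC n C0)" .
  qed
  show ?thesis using le ge qq by simp
qed


theorem corollary4p5:
  fixes n :: nat
  assumes "n \<ge> 3"
  shows "big_height (poly_ring n :: ('a::field) mpoly ring) (edge_ideal n (L2_edges n))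
           = enat (n - nat \<lceil>real n / 5\<rceil>)"
  by (rule main_result[OF assms])

end
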